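(* Let $S$ be a finite-dimensional system with Hamiltonian $H_S$ and state $\rho$. Then $$F_{H_S}(\rho)=\min_{\Phi_\rho,H_A}F_{H_{\rm tot}}(\Phi_\rho)=4\min_{\Phi_\rho,H_A}V_{H_{\rm tot}}(\Phi_\rho),$$ where the minimum is over all auxiliary systems $A$ with Hamiltonian $H_A$ and all pure states $|\Phi_\rho\rangle_{SA}$ with $\mathrm{Tr}_A|\Phi_\rho\rangle\langle\Phi_\rho|=\rho$, and $H_{\rm tot}=H_S\otimes I_A+I_S\otimes H_A$; in particular the minimum is attained.
   Context: Quantum Fisher information (QFI): for a state $\rho=\sum_j p_j|\psi_j\rangle\langle\psi_j|$ (spectral decomposition) and Hermitian $H$, $F_H(\rho)=2\sum_{j,k:\,p_j+p_k>0}\frac{(p_j-p_k)^2}{p_j+p_k}|\langle\psi_j|H|\psi_k\rangle|^2$. For a pure state $F_H(\psi)=4V_H(\psi)$ where $V_H(\psi)=\langle\psi|H^2|\psi\rangle-\langle\psi|H|\psi\rangle^2$. *)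

theory Defs
  imports "Jordan_Normal_Form.Matrix" "Jordan_Normal_Form.Conjugate"
begin

definition hermitian_mat :: "nat \<Rightarrow> complex mat \<Rightarrow> bool" where
  "hermitian_mat n A \<longleftrightarrow> A \<in> carrier_mat n n \<and>
     (\<forall>i<n. \<forall>j<n. A $$ (i,j) = cnj (A $$ (j,i)))"

definition mat_trace :: "complex mat \<Rightarrow> complex" where
  "mat_trace A = (\<Sum>i<dim_row A. A $$ (i,i))"

definition density_mat :: "nat \<Rightarrow> complex mat \<Rightarrow> bool" where
  "density_mat n \<rho> \<longleftrightarrow> hermitian_mat n \<rho> \<and>
     (\<forall>v \<in> carrier_vec n. 0 \<le> Re ((\<rho> *\<^sub>v v) \<bullet>c v)) \<and>
     mat_trace \<rho> = 1"

definition ketbra :: "complex vec \<Rightarrow> complex vec \<Rightarrow> complex mat" where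
  "ketbra v w = mat (dim_vec v) (dim_vec w) (\<lambda>(i,j). v $ i * cnj (w $ j))"

definition braket :: "complex vec \<Rightarrow> complex mat \<Rightarrow> complex vec \<Rightarrow> complex" where
  "braket v A w = (A *\<^sub>v w) \<bullet>c v"

definition spectral_decomp :: "nat \<Rightarrow> complex mat \<Rightarrow> (nat \<Rightarrow> real) \<Rightarrow> (nat \<Rightarrow> complex vec) \<Rightarrow> bool" where
  "spectral_decomp n \<rho> p \<psi> \<longleftrightarrow>
     (\<forall>j<n. \<psi> j \<in> carrier_vec n) \<and>
     (\<forall>j<n. \<forall>k<n. \<psi> j \<bullet>c \<psi> k = (if j = k then 1 else 0)) \<and>
     \<rho> = mat n n (\<lambda>(a,b). \<Sum>j<n. complex_of_real (p j) * (ketbra (\<psi> j) (\<psi> j)) $$ (a,b))"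

definition QFI :: "nat \<Rightarrow> complex mat \<Rightarrow> complex mat \<Rightarrow> real" where
  "QFI n \<rho> H = (let (p, \<psi>) = (SOME (p, \<psi>). spectral_decomp n \<rho> p \<psi>) in
     2 * (\<Sum>j<n. \<Sum>k<n. if p j + p k > 0 then
        (p j - p k)^2 / (p j + p k) * (cmod (braket (\<psi> j) H (\<psi> k)))^2 else 0))"

definition variance :: "complex mat \<Rightarrow> complex vec \<Rightarrow> real" where
  "variance H \<psi> = Re (braket \<psi> (H * H) \<psi>) - (Re (braket \<psi> H \<psi>))^2"

text \<open>Kronecker product; index (i,a) of C^n \<otimes> C^m is i*m + a.\<close>
definition tensor_mat :: "complex mat \<Rightarrow> complex mat \<Rightarrow> complex mat" where
  "tensor_mat A B = mat (dim_row A * dim_row B) (dim_col A * dim_col B)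
     (\<lambda>(i,j). A $$ (i div dim_row B, j div dim_col B) * B $$ (i mod dim_row B, j mod dim_col B))"

definition ptrace2 :: "nat \<Rightarrow> nat \<Rightarrow> complex mat \<Rightarrow> complex mat" where
  "ptrace2 n m M = mat n n (\<lambda>(i,j). \<Sum>a<m. M $$ (i*m + a, j*m + a))"

definition H_tot :: "nat \<Rightarrow> nat \<Rightarrow> complex mat \<Rightarrow> complex mat \<Rightarrow> complex mat" where
  "H_tot n m HS HA = tensor_mat HS (1\<^sub>m m) + tensor_mat (1\<^sub>m n) HA"

definition purification :: "nat \<Rightarrow> nat \<Rightarrow> complex mat \<Rightarrow> complex vec \<Rightarrow> bool" where
  "purification n m \<rho> \<Phi> \<longleftrightarrow> \<Phi> \<in> carrier_vec (n*m) \<and> \<Phi> \<bullet>c \<Phi> = 1 \<and>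
     ptrace2 n m (ketbra \<Phi> \<Phi>) = \<rho>"

end

theory Submission
  imports Defs "Jordan_Normal_Form.Schur_Decomposition"
begin


lemma cinner_sum: assumes "v \<in> carrier_vec N" "w \<in> carrier_vec N"
  shows "v \<bullet>c w = (\<Sum>i<N. v$i * cnj (w$i))"
  using assms by (simp add: scalar_prod_def atLeast0LessThan)

lemma mulv_sum: assumes "A \<in> carrier_mat N M" "x \<in> carrier_vec M" "i < N"
  shows "(A *\<^sub>v x) $ i = (\<Sum>j<M. A$$(i,j) * x$j)"
  using assms by (simp add: scalar_prod_def atLeast0LessThan row_def)

lemma herm_cnj: assumes "hermitian_mat N A" "i < N" "j < N"
  shows "cnj (A$$(i,j)) = A$$(j,i)"
proof -
  have "A$$(j,i) = cnj (A$$(i,j))" using assms unfolding hermitian_mat_def by blast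
  thus ?thesis by simp
qed

definition onb :: "nat \<Rightarrow> (nat \<Rightarrow> complex vec) \<Rightarrow> bool" where
  "onb N W \<longleftrightarrow> (\<forall>j<N. W j \<in> carrier_vec N) \<and> (\<forall>j<N. \<forall>k<N. W j \<bullet>c W k = (if j = k then 1 else 0))"

lemma onb_inner: assumes "onb N W" "j < N" "k < N"
  shows "(\<Sum>i<N. W j $ i * cnj (W k $ i)) = (if j = k then 1 else 0)"
  using assms cinner_sum[of "W j" N "W k"] unfolding onb_def by auto

lemma onb_complete: assumes "onb N W" "a < N" "b < N"
  shows "(\<Sum>j<N. W j $ a * cnj (W j $ b)) = (if a = b then 1 else 0)"
proof -
  define M where "M = mat N N (\<lambda>(i,j). W j $ i)"
  define Mh where "Mh = mat N N (\<lambda>(j,i). cnj (W j $ i))"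
  have M: "M \<in> carrier_mat N N" and Mh: "Mh \<in> carrier_mat N N" unfolding M_def Mh_def by auto
  have "Mh * M = 1\<^sub>m N"
  proof (rule eq_matI)
    fix j k assume jk: "j < dim_row (1\<^sub>m N)" "k < dim_col (1\<^sub>m N)"
    have "(Mh * M) $$ (j,k) = (\<Sum>i<N. cnj (W j $ i) * W k $ i)"
      using jk M Mh by (simp add: scalar_prod_def atLeast0LessThan row_def col_def M_def Mh_def)
    also have "\<dots> = (\<Sum>i<N. W k $ i * cnj (W j $ i))" by (simp add: mult.commute)
    also have "\<dots> = (if k = j then 1 else 0)" using onb_inner[OF assms(1), of k j] jk by auto
    finally show "(Mh * M) $$ (j,k) = 1\<^sub>m N $$ (j,k)" using jk by auto
  qed (auto simp: M_def Mh_def)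
  hence "M * Mh = 1\<^sub>m N" using mat_mult_left_right_inverse[OF Mh M] by auto
  hence "(M * Mh) $$ (a,b) = (if a = b then 1 else 0)" using assms by auto
  moreover have "(M * Mh) $$ (a,b) = (\<Sum>j<N. W j $ a * cnj (W j $ b))"
    using assms M Mh by (simp add: scalar_prod_def atLeast0LessThan row_def col_def M_def Mh_def)
  ultimately show ?thesis by simp
qed

lemma self_inner: assumes "v \<in> carrier_vec N"
  shows "v \<bullet>c v = complex_of_real (\<Sum>i<N. (cmod (v$i))^2)"
  unfolding cinner_sum[OF assms assms] of_real_sum
  by (rule sum.cong, auto simp: complex_norm_square[symmetric])

lemma self_inner_Re: assumes "v \<in> carrier_vec N"
  shows "Re (v \<bullet>c v) = (\<Sum>i<N. (cmod (v$i))^2)" "Re (v \<bullet>c v) \<ge> 0"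
  using self_inner[OF assms] by (auto intro: sum_nonneg)

lemma cnj_inner: assumes "v \<in> carrier_vec N" "w \<in> carrier_vec N"
  shows "cnj (v \<bullet>c w) = w \<bullet>c v"
  unfolding cinner_sum[OF assms] cinner_sum[OF assms(2,1)]
  by (simp add: mult.commute)

lemma smult_inner: assumes "v \<in> carrier_vec N" "w \<in> carrier_vec N"
  shows "(c \<cdot>\<^sub>v v) \<bullet>c (d \<cdot>\<^sub>v w) = c * cnj d * (v \<bullet>c w)"
proof -
  have "(c \<cdot>\<^sub>v v) \<bullet>c (d \<cdot>\<^sub>v w) = (\<Sum>i<N. (c * v$i) * cnj (d * w$i))"
    using assms by (subst cinner_sum[of _ N], auto)
  also have "\<dots> = c * cnj d * (\<Sum>i<N. v$i * cnj (w$i))"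
    by (simp add: sum_distrib_left mult_ac)
  finally show ?thesis using cinner_sum[OF assms] by simp
qed

lemma herm_inner: assumes "hermitian_mat N A" "x \<in> carrier_vec N" "y \<in> carrier_vec N"
  shows "(A *\<^sub>v x) \<bullet>c y = x \<bullet>c (A *\<^sub>v y)"
proof -
  have A: "A \<in> carrier_mat N N" using assms(1) unfolding hermitian_mat_def by auto
  have "(A *\<^sub>v x) \<bullet>c y = (\<Sum>i<N. (\<Sum>j<N. A$$(i,j) * x$j) * cnj (y$i))"
    using A assms by (subst cinner_sum[of _ N], auto intro!: sum.cong simp: mulv_sum[OF A assms(2)] simp del: index_mult_mat_vec)
  also have "\<dots> = (\<Sum>i<N. \<Sum>j<N. A$$(i,j) * x$j * cnj (y$i))"
    by (simp add: sum_distrib_right)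
  also have "\<dots> = (\<Sum>j<N. \<Sum>i<N. A$$(i,j) * x$j * cnj (y$i))"
    by (rule sum.swap)
  also have "\<dots> = (\<Sum>j<N. x$j * cnj (\<Sum>i<N. A$$(j,i) * y$i))"
  proof (rule sum.cong, simp)
    fix j assume j: "j \<in> {..<N}"
    have "(\<Sum>i<N. A$$(i,j) * x$j * cnj (y$i)) = (\<Sum>i<N. x$j * (cnj (A$$(j,i)) * cnj (y$i)))"
      by (rule sum.cong, simp, insert j, auto simp: herm_cnj[OF assms(1)])
    also have "\<dots> = x$j * cnj (\<Sum>i<N. A$$(j,i) * y$i)" by (simp add: sum_distrib_left)
    finally show "(\<Sum>i<N. A$$(i,j) * x$j * cnj (y$i)) = x$j * cnj (\<Sum>i<N. A$$(j,i) * y$i)" .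
  qed
  also have "\<dots> = x \<bullet>c (A *\<^sub>v y)"
    using A assms by (subst cinner_sum[of _ N], auto intro!: sum.cong simp: mulv_sum[OF A assms(3)] simp del: index_mult_mat_vec)
  finally show ?thesis .
qed

definition comb :: "nat \<Rightarrow> (nat \<Rightarrow> complex vec) \<Rightarrow> complex vec \<Rightarrow> complex vec" where
  "comb N W c = vec N (\<lambda>a. \<Sum>i<N. c$i * W i $ a)"

lemma comb_carrier[simp]: "comb N W c \<in> carrier_vec N"
  unfolding comb_def by auto

lemma comb_inner: assumes "onb N W" "c \<in> carrier_vec N" "d \<in> carrier_vec N"
  shows "comb N W c \<bullet>c comb N W d = c \<bullet>c d"
proof -
  have "comb N W c \<bullet>c comb N W d = (\<Sum>a<N. (\<Sum>i<N. c$i * W i $ a) * cnj (\<Sum>k<N. d$k * W k $ a))"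
    by (subst cinner_sum[of _ N], auto simp: comb_def)
  also have "\<dots> = (\<Sum>a<N. \<Sum>k<N. \<Sum>i<N. c$i * cnj (d$k) * (W i $ a * cnj (W k $ a)))"
    by (simp add: sum_distrib_left sum_distrib_right mult_ac)
  also have "\<dots> = (\<Sum>k<N. \<Sum>a<N. \<Sum>i<N. c$i * cnj (d$k) * (W i $ a * cnj (W k $ a)))"
    by (rule sum.swap)
  also have "\<dots> = (\<Sum>k<N. \<Sum>i<N. \<Sum>a<N. c$i * cnj (d$k) * (W i $ a * cnj (W k $ a)))"
    by (rule sum.cong, simp, rule sum.swap)
  also have "\<dots> = (\<Sum>k<N. \<Sum>i<N. c$i * cnj (d$k) * (\<Sum>a<N. W i $ a * cnj (W k $ a)))"
    by (simp add: sum_distrib_left)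
  also have "\<dots> = (\<Sum>i<N. \<Sum>k<N. c$i * cnj (d$k) * (\<Sum>a<N. W i $ a * cnj (W k $ a)))"
    by (rule sum.swap)
  also have "\<dots> = (\<Sum>i<N. \<Sum>k<N. c$i * cnj (d$k) * (if i = k then 1 else 0))"
    using onb_inner[OF assms(1)] by simp
  also have "\<dots> = (\<Sum>i<N. c$i * cnj (d$i))"
    by (simp add: if_distrib cong: if_cong)
  also have "\<dots> = c \<bullet>c d" using assms by (subst cinner_sum[of _ N], auto)
  finally show ?thesis .
qed

lemma onb_comb: assumes "onb N W" "onb N C"
  shows "onb N (\<lambda>l. comb N W (C l))"
  using assms comb_inner[OF assms(1)] unfolding onb_def by auto


lemma sum4_perm:
  "(\<Sum>i<N. \<Sum>j<N. \<Sum>c<N. \<Sum>d<N. f i j c d) = (\<Sum>c<N. \<Sum>d<N. \<Sum>i<N. \<Sum>j<N. (f i j c d :: complex))"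
proof -
  have "(\<Sum>i<N. \<Sum>j<N. \<Sum>c<N. \<Sum>d<N. f i j c d) = (\<Sum>i<N. \<Sum>c<N. \<Sum>j<N. \<Sum>d<N. f i j c d)"
    by (rule sum.cong[OF refl], rule sum.swap)
  also have "\<dots> = (\<Sum>i<N. \<Sum>c<N. \<Sum>d<N. \<Sum>j<N. f i j c d)"
    by (rule sum.cong[OF refl], rule sum.cong[OF refl], rule sum.swap)
  also have "\<dots> = (\<Sum>c<N. \<Sum>i<N. \<Sum>d<N. \<Sum>j<N. f i j c d)"
    by (rule sum.swap)
  also have "\<dots> = (\<Sum>c<N. \<Sum>d<N. \<Sum>i<N. \<Sum>j<N. f i j c d)"
    by (rule sum.cong[OF refl], rule sum.swap)
  finally show ?thesis .
qed

lemma sum3_perm: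
  "(\<Sum>i<N. \<Sum>j<N. \<Sum>l<M. f i j l) = (\<Sum>l<M. \<Sum>i<N. \<Sum>j<N. (f i j l :: complex))"
proof -
  have "(\<Sum>i<N. \<Sum>j<N. \<Sum>l<M. f i j l) = (\<Sum>i<N. \<Sum>l<M. \<Sum>j<N. f i j l)"
    by (rule sum.cong[OF refl], rule sum.swap)
  also have "\<dots> = (\<Sum>l<M. \<Sum>i<N. \<Sum>j<N. f i j l)"
    by (rule sum.swap)
  finally show ?thesis .
qed

lemma pull2: "(\<Sum>i<N. f i) * c * (\<Sum>j<M. g j) = (\<Sum>i<N. \<Sum>j<M. f i * c * (g j :: complex))"
proof -
  have "(\<Sum>i<N. f i) * c * (\<Sum>j<M. g j) = (\<Sum>i<N. f i * c * (\<Sum>j<M. g j))"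
    by (subst sum_distrib_right, subst sum_distrib_right, rule refl)
  also have "\<dots> = (\<Sum>i<N. \<Sum>j<M. f i * c * g j)"
    by (rule sum.cong[OF refl], rule sum_distrib_left)
  finally show ?thesis .
qed

lemma pull2c: "c * ((\<Sum>i<N. f i) * cnj (\<Sum>j<M. g j)) = (\<Sum>i<N. \<Sum>j<M. c * (f i * cnj (g j :: complex)))"
proof -
  have "c * ((\<Sum>i<N. f i) * cnj (\<Sum>j<M. g j)) = (\<Sum>i<N. f i) * c * (\<Sum>j<M. cnj (g j))"
    by (simp add: cnj_sum mult_ac)
  also have "\<dots> = (\<Sum>i<N. \<Sum>j<M. f i * c * cnj (g j))" by (rule pull2)
  finally show ?thesis by (simp add: mult_ac)
qed

lemma onb_expand: assumes W: "onb N W" and A: "A \<in> carrier_mat N N" and ab: "a < N" "b < N"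
  shows "A$$(a,b) = (\<Sum>i<N. \<Sum>j<N. W i $ a * ((A *\<^sub>v W j) \<bullet>c W i) * cnj (W j $ b))"
proof -
  have Wc: "\<And>j. j < N \<Longrightarrow> W j \<in> carrier_vec N" using W unfolding onb_def by auto
  have e: "\<And>i j. i < N \<Longrightarrow> j < N \<Longrightarrow> (A *\<^sub>v W j) \<bullet>c W i = (\<Sum>c<N. (\<Sum>d<N. A$$(c,d) * W j $ d) * cnj (W i $ c))"
    using A Wc by (subst cinner_sum[of _ N], auto intro!: sum.cong simp: mulv_sum[OF A Wc] simp del: index_mult_mat_vec)
  have "(\<Sum>i<N. \<Sum>j<N. W i $ a * ((A *\<^sub>v W j) \<bullet>c W i) * cnj (W j $ b))
     = (\<Sum>i<N. \<Sum>j<N. W i $ a * (\<Sum>c<N. (\<Sum>d<N. A$$(c,d) * W j $ d) * cnj (W i $ c)) * cnj (W j $ b))"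
    by (intro sum.cong refl, simp add: e)
  also have "\<dots> = (\<Sum>i<N. \<Sum>j<N. \<Sum>c<N. \<Sum>d<N. (W i $ a * cnj (W i $ c)) * A$$(c,d) * (W j $ d * cnj (W j $ b)))"
    by (intro sum.cong refl) (simp add: sum_distrib_left sum_distrib_right mult_ac)
  also have "\<dots> = (\<Sum>c<N. \<Sum>d<N. \<Sum>i<N. \<Sum>j<N. (W i $ a * cnj (W i $ c)) * A$$(c,d) * (W j $ d * cnj (W j $ b)))"
    by (rule sum4_perm)
  also have "\<dots> = (\<Sum>c<N. \<Sum>d<N. (\<Sum>i<N. W i $ a * cnj (W i $ c)) * A$$(c,d) * (\<Sum>j<N. W j $ d * cnj (W j $ b)))"
    by (intro sum.cong refl, rule pull2[symmetric])
  also have "\<dots> = (\<Sum>c<N. \<Sum>d<N. (if a = c then 1 else 0) * A$$(c,d) * (if d = b then 1 else 0))"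
    by (intro sum.cong refl, simp add: onb_complete[OF W] ab)
  also have "\<dots> = (\<Sum>c<N. \<Sum>d<N. if c = a then (if d = b then A$$(c,d) else 0) else 0)"
    by (intro sum.cong refl) auto
  also have "\<dots> = (\<Sum>c<N. if c = a then (\<Sum>d<N. if d = b then A$$(c,d) else 0) else 0)"
    by (intro sum.cong refl) auto
  also have "\<dots> = A$$(a,b)" using ab by simp
  finally show ?thesis by simp
qed

lemma reassemble: assumes W: "onb N W" and A: "A \<in> carrier_mat N N"
  and C: "\<And>l. l < N \<Longrightarrow> C l \<in> carrier_vec N"
  and h: "\<And>i j. i < N \<Longrightarrow> j < N \<Longrightarrow> (A *\<^sub>v W j) \<bullet>c W i = (\<Sum>l<N. complex_of_real (p l) * (C l $ i * cnj (C l $ j)))"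
  shows "A = mat N N (\<lambda>(a,b). \<Sum>l<N. complex_of_real (p l) * (comb N W (C l) $ a * cnj (comb N W (C l) $ b)))"
proof (rule eq_matI)
  fix a b assume ab: "a < dim_row (mat N N (\<lambda>(a,b). \<Sum>l<N. complex_of_real (p l) * (comb N W (C l) $ a * cnj (comb N W (C l) $ b))))"
     "b < dim_col (mat N N (\<lambda>(a,b). \<Sum>l<N. complex_of_real (p l) * (comb N W (C l) $ a * cnj (comb N W (C l) $ b))))"
  hence ab: "a < N" "b < N" by auto
  have "A$$(a,b) = (\<Sum>i<N. \<Sum>j<N. W i $ a * ((A *\<^sub>v W j) \<bullet>c W i) * cnj (W j $ b))"
    by (rule onb_expand[OF W A ab])
  also have "\<dots> = (\<Sum>i<N. \<Sum>j<N. W i $ a * (\<Sum>l<N. complex_of_real (p l) * (C l $ i * cnj (C l $ j))) * cnj (W j $ b))"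
    by (intro sum.cong refl, simp add: h)
  also have "\<dots> = (\<Sum>i<N. \<Sum>j<N. \<Sum>l<N. complex_of_real (p l) * ((C l $ i * W i $ a) * cnj (C l $ j * W j $ b)))"
    by (intro sum.cong refl) (simp add: sum_distrib_left sum_distrib_right mult_ac)
  also have "\<dots> = (\<Sum>l<N. \<Sum>i<N. \<Sum>j<N. complex_of_real (p l) * ((C l $ i * W i $ a) * cnj (C l $ j * W j $ b)))"
    by (rule sum3_perm)
  also have "\<dots> = (\<Sum>l<N. complex_of_real (p l) * ((\<Sum>i<N. C l $ i * W i $ a) * cnj (\<Sum>j<N. C l $ j * W j $ b)))"
    by (intro sum.cong refl, rule pull2c[symmetric])
  also have "\<dots> = (\<Sum>l<N. complex_of_real (p l) * (comb N W (C l) $ a * cnj (comb N W (C l) $ b)))"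
    using ab by (simp add: comb_def)
  finally show "A$$(a,b) = mat N N (\<lambda>(a,b). \<Sum>l<N. complex_of_real (p l) * (comb N W (C l) $ a * cnj (comb N W (C l) $ b))) $$ (a,b)"
    using ab by simp
qed (insert A, auto)

lemma spectral_decompI: assumes "onb N \<psi>"
  and "A = mat N N (\<lambda>(a,b). \<Sum>l<N. complex_of_real (p l) * (\<psi> l $ a * cnj (\<psi> l $ b)))"
  shows "spectral_decomp N A p \<psi>"
proof -
  have c: "\<And>j. j < N \<Longrightarrow> \<psi> j \<in> carrier_vec N" using assms(1) unfolding onb_def by auto
  have "mat N N (\<lambda>(a,b). \<Sum>l<N. complex_of_real (p l) * (\<psi> l $ a * cnj (\<psi> l $ b)))
      = mat N N (\<lambda>(a,b). \<Sum>j<N. complex_of_real (p j) * (ketbra (\<psi> j) (\<psi> j)) $$ (a,b))"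
    by (rule eq_matI, auto intro!: sum.cong simp: ketbra_def c carrier_vecD[OF c])
  thus ?thesis using assms unfolding spectral_decomp_def onb_def by auto
qed

lemma spectral_decompD: assumes "spectral_decomp N A p \<psi>"
  shows "onb N \<psi>" "A = mat N N (\<lambda>(a,b). \<Sum>l<N. complex_of_real (p l) * (\<psi> l $ a * cnj (\<psi> l $ b)))"
proof -
  show o: "onb N \<psi>" using assms unfolding spectral_decomp_def onb_def by auto
  have c: "\<And>j. j < N \<Longrightarrow> \<psi> j \<in> carrier_vec N" using o unfolding onb_def by auto
  have "mat N N (\<lambda>(a,b). \<Sum>l<N. complex_of_real (p l) * (\<psi> l $ a * cnj (\<psi> l $ b)))
      = mat N N (\<lambda>(a,b). \<Sum>j<N. complex_of_real (p j) * (ketbra (\<psi> j) (\<psi> j)) $$ (a,b))"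
    by (rule eq_matI, auto intro!: sum.cong simp: ketbra_def c carrier_vecD[OF c])
  thus "A = mat N N (\<lambda>(a,b). \<Sum>l<N. complex_of_real (p l) * (\<psi> l $ a * cnj (\<psi> l $ b)))"
    using assms unfolding spectral_decomp_def by auto
qed


lemma inner_smult_right: fixes v w :: "complex vec" assumes "v \<in> carrier_vec N" "w \<in> carrier_vec N"
  shows "v \<bullet>c (d \<cdot>\<^sub>v w) = cnj d * (v \<bullet>c w)"
  using smult_inner[OF assms, of 1 d] by simp

lemma inner_smult_left: fixes v w :: "complex vec" assumes "v \<in> carrier_vec N" "w \<in> carrier_vec N"
  shows "(c \<cdot>\<^sub>v v) \<bullet>c w = c * (v \<bullet>c w)"
  using smult_inner[OF assms, of c 1] by simp

lemma normalize_unit: assumes v: "v \<in> carrier_vec N" and v0: "v \<bullet>c v \<noteq> 0"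
  shows "(complex_of_real (1 / sqrt (Re (v \<bullet>c v))) \<cdot>\<^sub>v v) \<bullet>c (complex_of_real (1 / sqrt (Re (v \<bullet>c v))) \<cdot>\<^sub>v v) = 1"
proof -
  define R where "R = Re (v \<bullet>c v)"
  have vv: "v \<bullet>c v = complex_of_real R" unfolding R_def using self_inner[OF v] by simp
  have "R \<noteq> 0" using vv v0 by auto
  hence R0: "R > 0" using self_inner_Re(2)[OF v] unfolding R_def by linarith
  have "(complex_of_real (1 / sqrt R) \<cdot>\<^sub>v v) \<bullet>c (complex_of_real (1 / sqrt R) \<cdot>\<^sub>v v)
      = complex_of_real (1 / sqrt R) * cnj (complex_of_real (1 / sqrt R)) * complex_of_real R"
    by (subst smult_inner[OF v v], subst vv, rule refl)
  also have "\<dots> = complex_of_real (1 / sqrt R * (1 / sqrt R) * R)"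
    by (simp only: complex_cnj_complex_of_real of_real_mult)
  also have "1 / sqrt R * (1 / sqrt R) * R = 1" using R0
    by (simp add: field_simps)
  finally show ?thesis unfolding R_def by simp
qed

lemma spectral_exists: "hermitian_mat N A \<Longrightarrow> \<exists>p \<psi>. spectral_decomp N A p \<psi>"
proof (induction N arbitrary: A)
  case 0
  have A: "A \<in> carrier_mat 0 0" using 0 unfolding hermitian_mat_def by auto
  have o: "onb 0 (\<lambda>_. 0\<^sub>v 0)" unfolding onb_def by auto
  have e: "A = mat 0 0 (\<lambda>(a,b). \<Sum>l<0. complex_of_real ((\<lambda>_. 0) l) * ((\<lambda>_. 0\<^sub>v 0) l $ a * cnj ((\<lambda>_. 0\<^sub>v 0) l $ b)))"
    by (rule eq_matI, insert A, auto)
  have "spectral_decomp 0 A (\<lambda>_. 0) (\<lambda>_. 0\<^sub>v 0)" by (rule spectral_decompI[OF o e])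
  thus ?case by blast
next
  case (Suc n)
  define N where "N = Suc n"
  have herm: "hermitian_mat N A" using Suc.prems unfolding N_def .
  have A: "A \<in> carrier_mat N N" using herm unfolding hermitian_mat_def by auto
  obtain es where es: "char_poly A = (\<Prod>a\<leftarrow>es. [:- a, 1:])" "length es = N"
    using char_poly_factorized[OF A] by blast
  then obtain e es' where ees: "es = e # es'" unfolding N_def by (cases es, auto)
  have "poly (char_poly A) e = 0" unfolding es(1) ees by simp
  hence "eigenvalue A e" using eigenvalue_root_char_poly[OF A] by simp
  then obtain v where v: "v \<in> carrier_vec N" "v \<noteq> 0\<^sub>v N" "A *\<^sub>v v = e \<cdot>\<^sub>v v"
    unfolding eigenvalue_def eigenvector_def using A by auto
  have v0: "v \<bullet>c v \<noteq> 0" using v by simp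
  define u where "u = complex_of_real (1 / sqrt (Re (v \<bullet>c v))) \<cdot>\<^sub>v v"
  have u: "u \<in> carrier_vec N" unfolding u_def using v by simp
  have uu: "u \<bullet>c u = 1" unfolding u_def by (rule normalize_unit[OF v(1) v0])
  have u0: "u \<noteq> 0\<^sub>v N" using uu u by auto
  have Au: "A *\<^sub>v u = e \<cdot>\<^sub>v u"
    unfolding u_def mult_mat_vec[OF A v(1)] v(3) using v(1) by (auto simp: smult_smult_assoc mult.commute)
  have "e = (A *\<^sub>v u) \<bullet>c u" unfolding Au inner_smult_left[OF u u] uu by simp
  also have "\<dots> = u \<bullet>c (A *\<^sub>v u)" by (rule herm_inner[OF herm u u])
  also have "\<dots> = cnj e" unfolding Au inner_smult_right[OF u u] uu by simp
  finally have ereal: "e = cnj e" .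
  hence eRe: "e = complex_of_real (Re e)" by (simp add: complex_eq_iff)
  interpret cof_vec_space N "TYPE(complex)" .
  define b where "b = basis_completion u"
  from basis_completion[OF u u0, folded b_def]
  have dist_b: "distinct b" and indep: "\<not> lin_dep (set b)" and bc: "set b \<subseteq> carrier_vec N"
    and hdb: "hd b = u" and len_b: "length b = N" by auto
  from hdb len_b obtain vs where bv: "b = u # vs" unfolding N_def by (cases b, auto)
  define ws where "ws = gram_schmidt N b"
  from gram_schmidt_result[OF bc dist_b indep refl, folded ws_def]
  have wsc: "set ws \<subseteq> carrier_vec N" and orth: "corthogonal ws" and len_ws: "length ws = N"
    by (auto simp: len_b)
  have hdws: "hd ws = u" unfolding ws_def bv by (rule gram_schmidt_hd[OF u])
  define W where "W j = complex_of_real (1 / sqrt (Re (ws!j \<bullet>c ws!j))) \<cdot>\<^sub>v (ws!j)" for j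
  have wsjc: "\<And>j. j < N \<Longrightarrow> ws!j \<in> carrier_vec N" using wsc len_ws by auto
  have W: "onb N W" unfolding onb_def
  proof (intro conjI allI impI)
    fix j assume j: "j < N" show "W j \<in> carrier_vec N" unfolding W_def using wsjc[OF j] by simp
  next
    fix j k assume j: "j < N" and k: "k < N"
    show "W j \<bullet>c W k = (if j = k then 1 else 0)"
    proof (cases "j = k")
      case True
      have "ws!j \<bullet>c ws!j \<noteq> 0" using corthogonalD[OF orth, of j j] j len_ws by auto
      thus ?thesis using True normalize_unit[OF wsjc[OF j]] unfolding W_def by simp
    next
      case False
      have "ws!j \<bullet>c ws!k = 0" using corthogonalD[OF orth, of j k] j k len_ws False by auto
      thus ?thesis using False unfolding W_def by (simp add: smult_inner[OF wsjc[OF j] wsjc[OF k]])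
    qed
  qed
  have W0: "W 0 = u"
  proof -
    have "ws!0 = u" using hdws len_ws unfolding N_def by (cases ws, auto)
    thus ?thesis unfolding W_def using uu by simp
  qed
  have Wc: "\<And>j. j < N \<Longrightarrow> W j \<in> carrier_vec N" using W unfolding onb_def by auto
  define A3 where "A3 = mat n n (\<lambda>(i,j). (A *\<^sub>v W (Suc j)) \<bullet>c W (Suc i))"
  have herm3: "hermitian_mat n A3" unfolding hermitian_mat_def
  proof (intro conjI allI impI)
    show "A3 \<in> carrier_mat n n" unfolding A3_def by simp
  next
    fix i j assume i: "i < n" and j: "j < n"
    have ci: "W (Suc i) \<in> carrier_vec N" and cj: "W (Suc j) \<in> carrier_vec N"
      using Wc i j unfolding N_def by auto
    have "cnj (A3 $$ (j,i)) = cnj ((A *\<^sub>v W (Suc i)) \<bullet>c W (Suc j))" unfolding A3_def using i j by simp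
    also have "\<dots> = W (Suc j) \<bullet>c (A *\<^sub>v W (Suc i))" by (rule cnj_inner, insert A ci cj, auto)
    also have "\<dots> = (A *\<^sub>v W (Suc j)) \<bullet>c W (Suc i)" by (rule herm_inner[OF herm cj ci, symmetric])
    finally show "A3 $$ (i,j) = cnj (A3 $$ (j,i))" unfolding A3_def using i j by simp
  qed
  from Suc.IH[OF herm3] obtain q \<phi> where sd: "spectral_decomp n A3 q \<phi>" by blast
  have phi: "onb n \<phi>" and A3eq: "A3 = mat n n (\<lambda>(a,b). \<Sum>l<n. complex_of_real (q l) * (\<phi> l $ a * cnj (\<phi> l $ b)))"
    using spectral_decompD[OF sd] by auto
  have phic: "\<And>l. l < n \<Longrightarrow> \<phi> l \<in> carrier_vec n" using phi unfolding onb_def by auto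
  define C where "C l = (if l = 0 then unit_vec N 0 else vec N (\<lambda>i. if i = 0 then 0 else \<phi> (l - 1) $ (i - 1)))" for l
  define p where "p l = (if l = 0 then Re e else q (l - 1))" for l
  have Cc: "\<And>l. C l \<in> carrier_vec N" unfolding C_def by auto
  have C0: "C 0 $ 0 = 1" "\<And>i. i < n \<Longrightarrow> C 0 $ Suc i = 0" unfolding C_def N_def by auto
  have CS: "\<And>l i. i < n \<Longrightarrow> C (Suc l) $ (Suc i) = \<phi> l $ i" "\<And>l. C (Suc l) $ 0 = 0"
    unfolding C_def N_def by auto
  have Cinner: "\<And>l k. C l \<bullet>c C k = (\<Sum>i<N. C l $ i * cnj (C k $ i))"
    using Cc by (intro cinner_sum, auto)
  have C: "onb N C" unfolding onb_def
  proof (intro conjI allI impI)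
    fix l k assume l: "l < N" and k: "k < N"
    show "C l \<bullet>c C k = (if l = k then 1 else 0)"
    proof (cases l)
      case 0 note l0 = this
      show ?thesis
      proof (cases k)
        case 0 thus ?thesis using l0 unfolding Cinner N_def sum.lessThan_Suc_shift by (simp add: C0)
      next
        case (Suc k') thus ?thesis using l0 unfolding Cinner N_def sum.lessThan_Suc_shift by (simp add: C0 CS)
      qed
    next
      case (Suc l') note lS = this
      show ?thesis
      proof (cases k)
        case 0 thus ?thesis using lS unfolding Cinner N_def sum.lessThan_Suc_shift by (simp add: C0 CS)
      next
        case (Suc k')
        have l': "l' < n" and k': "k' < n" using l k lS Suc unfolding N_def by auto
        have "C l \<bullet>c C k = (\<Sum>i<n. \<phi> l' $ i * cnj (\<phi> k' $ i))"
          using lS Suc unfolding Cinner N_def sum.lessThan_Suc_shift by (simp add: CS)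
        also have "\<dots> = (if l' = k' then 1 else 0)" by (rule onb_inner[OF phi l' k'])
        finally show ?thesis using lS Suc by simp
      qed
    qed
  qed (rule Cc)
  have h: "(A *\<^sub>v W j) \<bullet>c W i = (\<Sum>l<N. complex_of_real (p l) * (C l $ i * cnj (C l $ j)))"
    if i: "i < N" and j: "j < N" for i j
  proof -
    have rhs: "(\<Sum>l<N. complex_of_real (p l) * (C l $ i * cnj (C l $ j)))
      = complex_of_real (Re e) * (C 0 $ i * cnj (C 0 $ j)) + (\<Sum>l<n. complex_of_real (q l) * (C (Suc l) $ i * cnj (C (Suc l) $ j)))"
      unfolding N_def sum.lessThan_Suc_shift p_def by simp
    show ?thesis
    proof (cases i)
      case 0 note i0 = this
      show ?thesis
      proof (cases j)
        case 0
        have "(A *\<^sub>v W j) \<bullet>c W i = e" unfolding 0 i0 W0 Au inner_smult_left[OF u u] uu by simp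
        thus ?thesis unfolding rhs using i0 0 eRe by (simp add: C0 CS N_def)
      next
        case (Suc j')
        have "(A *\<^sub>v W j) \<bullet>c W i = W j \<bullet>c (A *\<^sub>v u)" unfolding i0 W0 by (rule herm_inner[OF herm Wc[OF j] u])
        also have "\<dots> = cnj e * (W j \<bullet>c W 0)" unfolding Au W0 inner_smult_right[OF Wc[OF j] u] ..
        also have "W j \<bullet>c W 0 = 0" using W j Suc unfolding onb_def N_def by auto
        moreover have "j' < n" using j Suc unfolding N_def by auto
        ultimately show ?thesis unfolding rhs using i0 Suc by (simp add: C0 CS N_def)
      qed
    next
      case (Suc i') note iS = this
      show ?thesis
      proof (cases j)
        case 0
        have "(A *\<^sub>v W j) \<bullet>c W i = e * (W 0 \<bullet>c W i)" unfolding 0 W0 Au inner_smult_left[OF u Wc[OF i]] ..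
        also have "W 0 \<bullet>c W i = 0" using W i iS unfolding onb_def N_def by auto
        moreover have "i' < n" using i iS unfolding N_def by auto
        ultimately show ?thesis unfolding rhs using iS 0 by (simp add: C0 CS N_def)
      next
        case (Suc j')
        have i': "i' < n" and j': "j' < n" using i j iS Suc unfolding N_def by auto
        have "(A *\<^sub>v W j) \<bullet>c W i = A3 $$ (i', j')" unfolding A3_def using i' j' iS Suc by simp
        also have "\<dots> = (\<Sum>l<n. complex_of_real (q l) * (\<phi> l $ i' * cnj (\<phi> l $ j')))"
          by (subst A3eq, insert i' j', simp)
        also have "\<dots> = (\<Sum>l<n. complex_of_real (q l) * (C (Suc l) $ i * cnj (C (Suc l) $ j)))"
          using iS Suc i' j' by (simp add: CS)
        finally show ?thesis unfolding rhs using iS Suc i' by (simp add: C0 CS N_def)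
      qed
    qed
  qed
  have "A = mat N N (\<lambda>(a,b). \<Sum>l<N. complex_of_real (p l) * (comb N W (C l) $ a * cnj (comb N W (C l) $ b)))"
    by (rule reassemble[OF W A Cc h])
  moreover have "onb N (\<lambda>l. comb N W (C l))" by (rule onb_comb[OF W C])
  ultimately have "spectral_decomp N A p (\<lambda>l. comb N W (C l))" by (intro spectral_decompI)
  thus ?case unfolding N_def by blast
qed



definition qf :: "nat \<Rightarrow> (nat \<Rightarrow> real) \<Rightarrow> (nat \<Rightarrow> complex vec) \<Rightarrow> complex mat \<Rightarrow> real" where
  "qf N p \<psi> H = 2 * (\<Sum>j<N. \<Sum>k<N. if p j + p k > 0 then
        (p j - p k)^2 / (p j + p k) * (cmod (braket (\<psi> j) H (\<psi> k)))^2 else 0)"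

lemma QFI_some: assumes "hermitian_mat N \<rho>"
  shows "\<exists>p \<psi>. spectral_decomp N \<rho> p \<psi> \<and> QFI N \<rho> H = qf N p \<psi> H"
proof -
  have ex: "\<exists>x. (\<lambda>(p,\<psi>). spectral_decomp N \<rho> p \<psi>) x" using spectral_exists[OF assms] by auto
  define x where "x = (SOME (p, \<psi>). spectral_decomp N \<rho> p \<psi>)"
  have "(\<lambda>(p,\<psi>). spectral_decomp N \<rho> p \<psi>) x" unfolding x_def by (rule someI_ex[OF ex])
  moreover obtain p \<psi> where xp: "x = (p, \<psi>)" by (cases x)
  moreover have "QFI N \<rho> H = qf N p \<psi> H" unfolding QFI_def qf_def x_def[symmetric] xp by simp
  ultimately show ?thesis by auto
qed

lemma cmod_sq: "(cmod z)^2 = Re (z * cnj z)"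
  by (simp add: complex_norm_square[symmetric])

lemma pull2c': "(\<Sum>i<N. f i) * cnj (\<Sum>j<M. g j) = (\<Sum>i<N. \<Sum>j<M. f i * cnj (g j :: complex))"
  using pull2c[where c=1] by simp

lemma parseval_c: assumes psi: "onb N \<psi>" and x: "x \<in> carrier_vec N"
  shows "(\<Sum>k<N. (x \<bullet>c \<psi> k) * cnj (x \<bullet>c \<psi> k)) = x \<bullet>c x"
proof -
  have pc: "\<And>k. k < N \<Longrightarrow> \<psi> k \<in> carrier_vec N" using psi unfolding onb_def by auto
  have "(\<Sum>k<N. (x \<bullet>c \<psi> k) * cnj (x \<bullet>c \<psi> k))
     = (\<Sum>k<N. (\<Sum>a<N. x$a * cnj (\<psi> k $ a)) * cnj (\<Sum>b<N. x$b * cnj (\<psi> k $ b)))"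
    by (intro sum.cong refl, simp add: cinner_sum[OF x pc])
  also have "\<dots> = (\<Sum>k<N. \<Sum>a<N. \<Sum>b<N. ((x$a * cnj (\<psi> k $ a)) * cnj (x$b * cnj (\<psi> k $ b))))"
    by (intro sum.cong refl, rule pull2c')
  also have "\<dots> = (\<Sum>a<N. \<Sum>b<N. \<Sum>k<N. ((x$a * cnj (\<psi> k $ a)) * cnj (x$b * cnj (\<psi> k $ b))))"
    by (rule sum3_perm[symmetric])
  also have "\<dots> = (\<Sum>a<N. \<Sum>b<N. x$a * cnj (x$b) * (\<Sum>k<N. \<psi> k $ b * cnj (\<psi> k $ a)))"
    by (intro sum.cong refl, simp add: sum_distrib_left mult_ac)
  also have "\<dots> = (\<Sum>a<N. \<Sum>b<N. if b = a then x$a * cnj (x$b) else 0)"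
    by (intro sum.cong refl, simp add: onb_complete[OF psi])
  also have "\<dots> = (\<Sum>a<N. x$a * cnj (x$a))" by simp
  also have "\<dots> = x \<bullet>c x" by (simp add: cinner_sum[OF x x])
  finally show ?thesis .
qed

lemma parseval: assumes psi: "onb N \<psi>" and x: "x \<in> carrier_vec N"
  shows "(\<Sum>k<N. (cmod (x \<bullet>c \<psi> k))^2) = Re (x \<bullet>c x)"
  unfolding cmod_sq parseval_c[OF assms, symmetric] by simp


lemma sum_if_j0: assumes "j0 < (N::nat)"
  shows "(\<Sum>j<N. if j = j0 then X else c j) = X + (\<Sum>j<N. c j) - (c j0 :: real)"
proof -
  have fin: "finite {..<N}" and j0: "j0 \<in> {..<N}" using assms by auto
  have "(\<Sum>j<N. if j = j0 then X else c j) = X + (\<Sum>j\<in>{..<N} - {j0}. if j = j0 then X else c j)"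
    using sum.remove[OF fin j0, of "\<lambda>j. if j = j0 then X else c j"] by simp
  also have "(\<Sum>j\<in>{..<N} - {j0}. if j = j0 then X else c j) = (\<Sum>j\<in>{..<N} - {j0}. c j)"
    by (rule sum.cong, auto)
  also have "\<dots> = (\<Sum>j<N. c j) - c j0" using sum.remove[OF fin j0, of c] by simp
  finally show ?thesis by simp
qed

lemma braket_sym: assumes H: "hermitian_mat N H" and x: "x \<in> carrier_vec N" and y: "y \<in> carrier_vec N"
  shows "cmod (braket x H y) = cmod (braket y H x)"
proof -
  have HN: "H \<in> carrier_mat N N" using H unfolding hermitian_mat_def by auto
  have "braket x H y = (H *\<^sub>v y) \<bullet>c x" unfolding braket_def ..
  also have "\<dots> = y \<bullet>c (H *\<^sub>v x)" by (rule herm_inner[OF H y x])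
  also have "\<dots> = cnj ((H *\<^sub>v x) \<bullet>c y)" by (rule cnj_inner[symmetric], insert HN x y, auto)
  finally show ?thesis unfolding braket_def by simp
qed

lemma pure_qf: assumes H: "hermitian_mat N H" and Phic: "\<Phi> \<in> carrier_vec N" and Phi1: "\<Phi> \<bullet>c \<Phi> = 1"
  and sd: "spectral_decomp N (ketbra \<Phi> \<Phi>) p \<psi>"
  shows "qf N p \<psi> H = 4 * variance H \<Phi>"
proof -
  have HN: "H \<in> carrier_mat N N" using H unfolding hermitian_mat_def by auto
  have psi: "onb N \<psi>" using spectral_decompD[OF sd] by auto
  have pc: "\<And>k. k < N \<Longrightarrow> \<psi> k \<in> carrier_vec N" using psi unfolding onb_def by auto
  have rep: "\<Phi>$a * cnj (\<Phi>$b) = (\<Sum>l<N. complex_of_real (p l) * (\<psi> l $ a * cnj (\<psi> l $ b)))"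
    if "a < N" "b < N" for a b
  proof -
    have "ketbra \<Phi> \<Phi> $$ (a,b) = \<Phi>$a * cnj (\<Phi>$b)" unfolding ketbra_def using that Phic by auto
    thus ?thesis using that by (subst (asm) spectral_decompD(2)[OF sd], simp)
  qed
  define t where "t k = \<psi> k \<bullet>c \<Phi>" for k
  have tsum: "\<And>k. k < N \<Longrightarrow> t k = (\<Sum>b<N. \<psi> k $ b * cnj (\<Phi>$b))"
    unfolding t_def using pc Phic by (simp add: cinner_sum)
  have key: "\<Phi>$a * t k = complex_of_real (p k) * \<psi> k $ a" if a: "a < N" and k: "k < N" for a k
  proof -
    have "\<Phi>$a * t k = (\<Sum>b<N. (\<Phi>$a * cnj (\<Phi>$b)) * \<psi> k $ b)"
      unfolding tsum[OF k] by (simp add: sum_distrib_left mult_ac)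
    also have "\<dots> = (\<Sum>b<N. (\<Sum>l<N. complex_of_real (p l) * (\<psi> l $ a * cnj (\<psi> l $ b))) * \<psi> k $ b)"
      by (intro sum.cong refl, simp add: rep a)
    also have "\<dots> = (\<Sum>b<N. \<Sum>l<N. complex_of_real (p l) * \<psi> l $ a * (\<psi> k $ b * cnj (\<psi> l $ b)))"
      by (intro sum.cong refl, simp add: sum_distrib_right sum_distrib_left mult_ac)
    also have "\<dots> = (\<Sum>l<N. \<Sum>b<N. complex_of_real (p l) * \<psi> l $ a * (\<psi> k $ b * cnj (\<psi> l $ b)))"
      by (rule sum.swap)
    also have "\<dots> = (\<Sum>l<N. complex_of_real (p l) * \<psi> l $ a * (\<Sum>b<N. \<psi> k $ b * cnj (\<psi> l $ b)))"
      by (simp add: sum_distrib_left)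
    also have "\<dots> = (\<Sum>l<N. if l = k then complex_of_real (p l) * \<psi> l $ a else 0)"
      by (intro sum.cong refl, auto simp: onb_inner[OF psi k])
    also have "\<dots> = complex_of_real (p k) * \<psi> k $ a" using k by simp
    finally show ?thesis .
  qed
  have pt: "complex_of_real (p k) = t k * cnj (t k)" if k: "k < N" for k
  proof -
    have "(\<Sum>a<N. (\<Phi>$a * t k) * cnj (\<psi> k $ a)) = (\<Sum>a<N. complex_of_real (p k) * (\<psi> k $ a * cnj (\<psi> k $ a)))"
      by (intro sum.cong refl, simp add: key[OF _ k] mult.assoc)
    also have "\<dots> = complex_of_real (p k)" by (simp add: sum_distrib_left[symmetric] onb_inner[OF psi k k])
    finally have 1: "(\<Sum>a<N. (\<Phi>$a * t k) * cnj (\<psi> k $ a)) = complex_of_real (p k)" .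
    have "(\<Sum>a<N. (\<Phi>$a * t k) * cnj (\<psi> k $ a)) = t k * (\<Phi> \<bullet>c \<psi> k)"
      by (simp add: cinner_sum[OF Phic pc[OF k]] sum_distrib_left mult_ac)
    also have "\<Phi> \<bullet>c \<psi> k = cnj (t k)" unfolding t_def by (rule cnj_inner[symmetric, OF pc[OF k] Phic])
    finally show ?thesis using 1 by simp
  qed
  have tp: "t k = complex_of_real (p k) * t k" if k: "k < N" for k
  proof -
    have "(\<Sum>a<N. (\<Phi>$a * t k) * cnj (\<Phi>$a)) = (\<Sum>a<N. complex_of_real (p k) * (\<psi> k $ a * cnj (\<Phi> $ a)))"
      by (intro sum.cong refl, simp add: key[OF _ k] mult.assoc)
    also have "\<dots> = complex_of_real (p k) * t k" by (simp add: sum_distrib_left[symmetric] tsum[OF k])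
    finally have 1: "(\<Sum>a<N. (\<Phi>$a * t k) * cnj (\<Phi>$a)) = complex_of_real (p k) * t k" .
    have "(\<Sum>a<N. (\<Phi>$a * t k) * cnj (\<Phi>$a)) = t k * (\<Phi> \<bullet>c \<Phi>)"
      by (simp add: cinner_sum[OF Phic Phic] sum_distrib_left mult_ac)
    thus ?thesis using 1 Phi1 by simp
  qed
  have p01: "p k = 0 \<or> p k = 1" if k: "k < N" for k
  proof (cases "t k = 0")
    case True thus ?thesis using pt[OF k] by simp
  next
    case False
    hence "complex_of_real (p k) = 1" using tp[OF k] by (metis mult_cancel_right1)
    thus ?thesis by simp
  qed
  have psum: "(\<Sum>k<N. p k) = 1"
  proof -
    have "complex_of_real (\<Sum>k<N. p k) = (\<Sum>k<N. t k * cnj (t k))" by (simp add: pt)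
    also have "\<dots> = (\<Sum>k<N. (\<Phi> \<bullet>c \<psi> k) * cnj (\<Phi> \<bullet>c \<psi> k))"
      by (intro sum.cong refl, simp add: t_def cnj_inner[OF pc Phic, symmetric] mult.commute)
    also have "\<dots> = 1" using parseval_c[OF psi Phic] Phi1 by simp
    finally show ?thesis by (metis of_real_eq_1_iff)
  qed
  define S where "S = {k \<in> {..<N}. p k = 1}"
  have "(\<Sum>k<N. p k) = (\<Sum>k<N. if p k = 1 then 1 else 0)"
    by (intro sum.cong refl, insert p01, auto)
  also have "\<dots> = real (card S)" unfolding S_def by (simp add: sum.If_cases Int_def conj_commute)
  finally have "card S = 1" using psum by simp
  then obtain j0 where Sj0: "S = {j0}" by (rule card_1_singletonE)
  have j0: "j0 < N" "p j0 = 1" using Sj0 unfolding S_def by auto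
  have pj: "p j = (if j = j0 then 1 else 0)" if j: "j < N" for j
    using Sj0 p01[OF j] j unfolding S_def by auto
  define c where "c k = (cmod (braket (\<psi> k) H (\<psi> j0)))^2" for k
  have qf1: "qf N p \<psi> H = 2 * (\<Sum>j<N. \<Sum>k<N. if j = j0 then (if k = j0 then 0 else c k) else (if k = j0 then c j else 0))"
    unfolding qf_def
  proof (intro arg_cong[where f="\<lambda>x. 2 * x"] sum.cong refl)
    fix j k assume j: "j \<in> {..<N}" and k: "k \<in> {..<N}"
    have cs: "cmod (braket (\<psi> j0) H (\<psi> k)) = cmod (braket (\<psi> k) H (\<psi> j0))"
      by (rule braket_sym[OF H pc pc], insert j0 k, auto)
    show "(if p j + p k > 0 then (p j - p k)^2 / (p j + p k) * (cmod (braket (\<psi> j) H (\<psi> k)))^2 else 0)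
      = (if j = j0 then (if k = j0 then 0 else c k) else (if k = j0 then c j else 0))"
      using j k by (auto simp: pj c_def cs)
  qed
  also have "\<dots> = 2 * (\<Sum>j<N. if j = j0 then ((\<Sum>k<N. c k) - c j0) else c j)"
  proof -
    have "(\<Sum>j<N. \<Sum>k<N. if j = j0 then (if k = j0 then 0 else c k) else (if k = j0 then c j else 0))
       = (\<Sum>j<N. if j = j0 then ((\<Sum>k<N. c k) - c j0) else c j)"
    proof (intro sum.cong refl)
      fix j assume j: "j \<in> {..<N}"
      show "(\<Sum>k<N. if j = j0 then (if k = j0 then 0 else c k) else (if k = j0 then c j else 0))
        = (if j = j0 then ((\<Sum>k<N. c k) - c j0) else c j)"
      proof (cases "j = j0")
        case True
        have "(\<Sum>k<N. if k = j0 then 0 else c k) = 0 + (\<Sum>k<N. c k) - c j0" by (rule sum_if_j0[OF j0(1)])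
        thus ?thesis using True by simp
      next
        case False thus ?thesis using j0 by simp
      qed
    qed
    thus ?thesis by simp
  qed
  also have "\<dots> = 4 * ((\<Sum>k<N. c k) - c j0)" using sum_if_j0[OF j0(1)] by simp
  finally have qf2: "qf N p \<psi> H = 4 * ((\<Sum>k<N. c k) - c j0)" .
  define \<chi> where "\<chi> = \<psi> j0"
  have chic: "\<chi> \<in> carrier_vec N" unfolding \<chi>_def using pc j0 by auto
  have csum: "(\<Sum>k<N. c k) = Re ((H *\<^sub>v \<chi>) \<bullet>c (H *\<^sub>v \<chi>))"
    unfolding c_def braket_def \<chi>_def[symmetric] by (rule parseval[OF psi], insert HN chic, auto)
  have chi: "\<chi> = t j0 \<cdot>\<^sub>v \<Phi>"
    by (rule eq_vecI, insert key[of _ j0] j0 chic Phic, auto simp: \<chi>_def mult.commute)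
  have tt: "t j0 * cnj (t j0) = 1" using pt[OF j0(1)] j0 by simp
  define z where "z = (H *\<^sub>v \<Phi>) \<bullet>c \<Phi>"
  have HPc: "H *\<^sub>v \<Phi> \<in> carrier_vec N" using HN Phic by auto
  have Hchi: "H *\<^sub>v \<chi> = t j0 \<cdot>\<^sub>v (H *\<^sub>v \<Phi>)" unfolding chi by (rule mult_mat_vec[OF HN Phic])
  have n1: "(H *\<^sub>v \<chi>) \<bullet>c (H *\<^sub>v \<chi>) = (H *\<^sub>v \<Phi>) \<bullet>c (H *\<^sub>v \<Phi>)"
    unfolding Hchi smult_inner[OF HPc HPc] tt by simp
  have cj0: "c j0 = (cmod z)^2"
    unfolding c_def braket_def \<chi>_def[symmetric] z_def Hchi
    by (subst chi, subst smult_inner[OF HPc Phic], simp add: tt)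
  have zreal: "z = cnj z"
  proof -
    have "z = \<Phi> \<bullet>c (H *\<^sub>v \<Phi>)" unfolding z_def by (rule herm_inner[OF H Phic Phic])
    also have "\<dots> = cnj z" unfolding z_def by (rule cnj_inner[symmetric, OF HPc Phic])
    finally show ?thesis .
  qed
  hence "Im z = 0" by (simp add: complex_eq_iff)
  hence cz: "(cmod z)^2 = (Re z)^2" by (simp add: cmod_def)
  have "braket \<Phi> (H * H) \<Phi> = (H *\<^sub>v (H *\<^sub>v \<Phi>)) \<bullet>c \<Phi>"
    unfolding braket_def using HN Phic by simp
  also have "\<dots> = (H *\<^sub>v \<Phi>) \<bullet>c (H *\<^sub>v \<Phi>)" by (rule herm_inner[OF H HPc Phic])
  finally have v2: "braket \<Phi> (H * H) \<Phi> = (H *\<^sub>v \<Phi>) \<bullet>c (H *\<^sub>v \<Phi>)" .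
  have "variance H \<Phi> = Re ((H *\<^sub>v \<Phi>) \<bullet>c (H *\<^sub>v \<Phi>)) - (Re z)^2"
    unfolding variance_def v2 unfolding z_def braket_def ..
  thus ?thesis unfolding qf2 csum n1 cj0 cz by simp
qed



lemma sum_lessThan_add: fixes k m :: nat shows "(\<Sum>y<k+m. g y) = (\<Sum>y<k. g y) + (\<Sum>a<m. (g (k+a) :: 'a :: comm_monoid_add))"
  by (induction m) (auto simp: add.assoc)

lemma double_sum: fixes n m :: nat shows "(\<Sum>y<n*m. g y) = (\<Sum>i<n. \<Sum>a<m. (g (i*m+a) :: 'a :: comm_monoid_add))"
proof (induction n)
  case 0 thus ?case by simp
next
  case (Suc n)
  have "(\<Sum>y<Suc n * m. g y) = (\<Sum>y<n*m + m. g y)" by (simp add: add.commute)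
  also have "\<dots> = (\<Sum>y<n*m. g y) + (\<Sum>a<m. g (n*m+a))" by (rule sum_lessThan_add)
  finally show ?case using Suc by simp
qed

lemma idx_div: "a < m \<Longrightarrow> (i*m+a) div m = (i::nat)" by auto
lemma idx_mod: "a < m \<Longrightarrow> (i*m+a) mod m = (a::nat)" by auto
lemma idx_lt: "i < n \<Longrightarrow> a < m \<Longrightarrow> i*m+a < n*(m::nat)"
proof -
  assume "i < n" "a < m"
  hence "i*m + a < i*m + m" by simp
  also have "\<dots> = Suc i * m" by simp
  also have "\<dots> \<le> n * m" using \<open>i < n\<close> by (intro mult_le_mono1) auto
  finally show ?thesis .
qed

lemma Htot_carrier: assumes "HS \<in> carrier_mat n n" "G \<in> carrier_mat m m"
  shows "H_tot n m HS G \<in> carrier_mat (n*m) (n*m)"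
  using assms unfolding H_tot_def tensor_mat_def by auto

lemma Htot_entry: assumes HS: "HS \<in> carrier_mat n n" and G: "G \<in> carrier_mat m m"
  and i: "i < n" and a: "a < m" and i': "i' < n" and a': "a' < m"
  shows "H_tot n m HS G $$ (i*m+a, i'*m+a') = HS$$(i,i') * (if a = a' then 1 else 0) + (if i = i' then 1 else 0) * G$$(a,a')"
proof -
  have x: "i*m+a < n*m" "i'*m+a' < n*m" using idx_lt i a i' a' by auto
  show ?thesis using HS G x i a i' a' unfolding H_tot_def tensor_mat_def
    by (simp add: idx_div[OF a] idx_mod[OF a] idx_div[OF a'] idx_mod[OF a'])
qed

lemma Htot_mulv: assumes HS: "HS \<in> carrier_mat n n" and G: "G \<in> carrier_mat m m"
  and Phi: "\<Phi> \<in> carrier_vec (n*m)" and i: "i < n" and a: "a < m"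
  shows "(H_tot n m HS G *\<^sub>v \<Phi>) $ (i*m+a) = (\<Sum>i'<n. HS$$(i,i') * \<Phi>$(i'*m+a)) + (\<Sum>a'<m. G$$(a,a') * \<Phi>$(i*m+a'))"
proof -
  have Hc: "H_tot n m HS G \<in> carrier_mat (n*m) (n*m)" by (rule Htot_carrier[OF HS G])
  have "(H_tot n m HS G *\<^sub>v \<Phi>) $ (i*m+a) = (\<Sum>y<n*m. H_tot n m HS G $$ (i*m+a, y) * \<Phi>$y)"
    by (rule mulv_sum[OF Hc Phi idx_lt[OF i a]])
  also have "\<dots> = (\<Sum>i'<n. \<Sum>a'<m. H_tot n m HS G $$ (i*m+a, i'*m+a') * \<Phi>$(i'*m+a'))"
    by (rule double_sum)
  also have "\<dots> = (\<Sum>i'<n. \<Sum>a'<m. HS$$(i,i') * (if a = a' then \<Phi>$(i'*m+a') else 0) + (if i = i' then G$$(a,a') * \<Phi>$(i'*m+a') else 0))"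
  proof (intro sum.cong refl)
    fix i' a' assume i': "i' \<in> {..<n}" and a': "a' \<in> {..<m}"
    show "H_tot n m HS G $$ (i*m+a, i'*m+a') * \<Phi>$(i'*m+a') = HS$$(i,i') * (if a = a' then \<Phi>$(i'*m+a') else 0) + (if i = i' then G$$(a,a') * \<Phi>$(i'*m+a') else 0)"
      by (subst Htot_entry[OF HS G i a], insert i' a', auto simp: algebra_simps)
  qed
  also have "\<dots> = (\<Sum>i'<n. HS$$(i,i') * \<Phi>$(i'*m+a)) + (\<Sum>i'<n. if i = i' then (\<Sum>a'<m. G$$(a,a') * \<Phi>$(i'*m+a')) else 0)"
    unfolding sum.distrib
  proof (intro arg_cong2[where f="(+)"] sum.cong refl)
    fix i' assume "i' \<in> {..<n}"
    show "(\<Sum>a'<m. HS$$(i,i') * (if a = a' then \<Phi>$(i'*m+a') else 0)) = HS$$(i,i') * \<Phi>$(i'*m+a)"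
      using a by (simp add: sum_distrib_left[symmetric])
    show "(\<Sum>a'<m. if i = i' then G$$(a,a') * \<Phi>$(i'*m+a') else 0) = (if i = i' then (\<Sum>a'<m. G$$(a,a') * \<Phi>$(i'*m+a')) else 0)"
      by simp
  qed
  also have "\<dots> = (\<Sum>i'<n. HS$$(i,i') * \<Phi>$(i'*m+a)) + (\<Sum>a'<m. G$$(a,a') * \<Phi>$(i*m+a'))"
    using i by simp
  finally show ?thesis .
qed


context
  fixes n m :: nat and \<psi> :: "nat \<Rightarrow> complex vec" and HS :: "complex mat"
    and f G' :: "nat \<Rightarrow> nat \<Rightarrow> complex"
  assumes psi: "onb n \<psi>" and HS: "HS \<in> carrier_mat n n"
begin

definition "alpha j a = (\<Sum>i<n. cnj (\<psi> j $ i) * f i a)"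
definition "bb i a = (\<Sum>i'<n. HS$$(i,i') * f i' a) + (\<Sum>a'<m. G' a a' * f i a')"
definition "hh k j = braket (\<psi> k) HS (\<psi> j)"
definition "BB k a = (\<Sum>j<n. hh k j * alpha j a) + (\<Sum>a'<m. G' a a' * alpha k a')"

lemma psic: "j < n \<Longrightarrow> \<psi> j \<in> carrier_vec n" using psi unfolding onb_def by auto

lemma f_expand: assumes i: "i < n" shows "f i a = (\<Sum>j<n. \<psi> j $ i * alpha j a)"
proof -
  have "(\<Sum>j<n. \<psi> j $ i * alpha j a) = (\<Sum>j<n. \<Sum>i'<n. (\<psi> j $ i * cnj (\<psi> j $ i')) * f i' a)"
    unfolding alpha_def by (simp add: sum_distrib_left mult_ac)
  also have "\<dots> = (\<Sum>i'<n. \<Sum>j<n. (\<psi> j $ i * cnj (\<psi> j $ i')) * f i' a)" by (rule sum.swap)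
  also have "\<dots> = (\<Sum>i'<n. (\<Sum>j<n. \<psi> j $ i * cnj (\<psi> j $ i')) * f i' a)" by (simp add: sum_distrib_right)
  also have "\<dots> = (\<Sum>i'<n. if i = i' then f i' a else 0)"
    by (intro sum.cong refl, simp add: onb_complete[OF psi i])
  also have "\<dots> = f i a" using i by simp
  finally show ?thesis by simp
qed

lemma hh_sum: assumes k: "k < n" and j: "j < n"
  shows "hh k j = (\<Sum>i<n. \<Sum>i'<n. cnj (\<psi> k $ i) * HS$$(i,i') * \<psi> j $ i')"
proof -
  have "hh k j = (\<Sum>i<n. (HS *\<^sub>v \<psi> j) $ i * cnj (\<psi> k $ i))"
    unfolding hh_def braket_def using HS psic[OF j] psic[OF k] by (subst cinner_sum[of _ n], auto)
  also have "\<dots> = (\<Sum>i<n. (\<Sum>i'<n. HS$$(i,i') * \<psi> j $ i') * cnj (\<psi> k $ i))"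
    by (intro sum.cong refl, subst mulv_sum[OF HS psic[OF j]], auto)
  also have "\<dots> = (\<Sum>i<n. \<Sum>i'<n. cnj (\<psi> k $ i) * HS$$(i,i') * \<psi> j $ i')"
    by (intro sum.cong refl) (simp add: sum_distrib_left sum_distrib_right mult_ac)
  finally show ?thesis .
qed

lemma BB_eq: assumes k: "k < n" shows "(\<Sum>i<n. bb i a * cnj (\<psi> k $ i)) = BB k a"
proof -
  have 1: "(\<Sum>i<n. cnj (\<psi> k $ i) * (\<Sum>i'<n. HS$$(i,i') * f i' a)) = (\<Sum>j<n. hh k j * alpha j a)"
  proof -
    have "(\<Sum>i<n. cnj (\<psi> k $ i) * (\<Sum>i'<n. HS$$(i,i') * f i' a))
       = (\<Sum>i<n. cnj (\<psi> k $ i) * (\<Sum>i'<n. HS$$(i,i') * (\<Sum>j<n. \<psi> j $ i' * alpha j a)))"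
      by (intro sum.cong refl, simp add: f_expand[symmetric])
    also have "\<dots> = (\<Sum>i<n. \<Sum>i'<n. \<Sum>j<n. cnj (\<psi> k $ i) * HS$$(i,i') * \<psi> j $ i' * alpha j a)"
      by (intro sum.cong refl, simp add: sum_distrib_left mult_ac)
    also have "\<dots> = (\<Sum>j<n. \<Sum>i<n. \<Sum>i'<n. cnj (\<psi> k $ i) * HS$$(i,i') * \<psi> j $ i' * alpha j a)"
      by (rule sum3_perm)
    also have "\<dots> = (\<Sum>j<n. (\<Sum>i<n. \<Sum>i'<n. cnj (\<psi> k $ i) * HS$$(i,i') * \<psi> j $ i') * alpha j a)"
      by (simp add: sum_distrib_right)
    also have "\<dots> = (\<Sum>j<n. hh k j * alpha j a)"
      by (intro sum.cong refl, simp add: hh_sum[OF k])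
    finally show ?thesis .
  qed
  have 2: "(\<Sum>i<n. cnj (\<psi> k $ i) * (\<Sum>a'<m. G' a a' * f i a')) = (\<Sum>a'<m. G' a a' * alpha k a')"
  proof -
    have "(\<Sum>i<n. cnj (\<psi> k $ i) * (\<Sum>a'<m. G' a a' * f i a')) = (\<Sum>i<n. \<Sum>a'<m. G' a a' * (cnj (\<psi> k $ i) * f i a'))"
      by (simp add: sum_distrib_left mult_ac)
    also have "\<dots> = (\<Sum>a'<m. \<Sum>i<n. G' a a' * (cnj (\<psi> k $ i) * f i a'))" by (rule sum.swap)
    also have "\<dots> = (\<Sum>a'<m. G' a a' * alpha k a')" unfolding alpha_def by (simp add: sum_distrib_left)
    finally show ?thesis .
  qed
  have "(\<Sum>i<n. bb i a * cnj (\<psi> k $ i)) = (\<Sum>i<n. cnj (\<psi> k $ i) * (\<Sum>i'<n. HS$$(i,i') * f i' a)) + (\<Sum>i<n. cnj (\<psi> k $ i) * (\<Sum>a'<m. G' a a' * f i a'))"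
    unfolding bb_def by (simp add: sum.distrib algebra_simps)
  thus ?thesis unfolding 1 2 BB_def .
qed

lemma decomp: "(\<Sum>i<n. \<Sum>a<m. (cmod (bb i a))^2) = (\<Sum>k<n. \<Sum>a<m. (cmod (BB k a))^2)"
proof -
  have "(\<Sum>i<n. \<Sum>a<m. (cmod (bb i a))^2) = (\<Sum>a<m. \<Sum>i<n. (cmod (bb i a))^2)" by (rule sum.swap)
  also have "\<dots> = (\<Sum>a<m. \<Sum>k<n. (cmod (BB k a))^2)"
  proof (rule sum.cong[OF refl])
    fix a assume "a \<in> {..<m}"
    define x where "x = vec n (\<lambda>i. bb i a)"
    have x: "x \<in> carrier_vec n" unfolding x_def by auto
    have "(\<Sum>i<n. (cmod (bb i a))^2) = Re (x \<bullet>c x)" using self_inner_Re(1)[OF x] unfolding x_def by simp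
    also have "\<dots> = (\<Sum>k<n. (cmod (x \<bullet>c \<psi> k))^2)" by (rule parseval[OF psi x, symmetric])
    also have "\<dots> = (\<Sum>k<n. (cmod (BB k a))^2)"
    proof (intro sum.cong refl)
      fix k assume k: "k \<in> {..<n}"
      have "x \<bullet>c \<psi> k = (\<Sum>i<n. bb i a * cnj (\<psi> k $ i))"
        using cinner_sum[OF x psic] k unfolding x_def by simp
      thus "(cmod (x \<bullet>c \<psi> k))^2 = (cmod (BB k a))^2" using BB_eq k by simp
    qed
    finally show "(\<Sum>i<n. (cmod (bb i a))^2) = (\<Sum>k<n. (cmod (BB k a))^2)" .
  qed
  also have "\<dots> = (\<Sum>k<n. \<Sum>a<m. (cmod (BB k a))^2)" by (rule sum.swap)
  finally show ?thesis .
qed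

end


lemma pair_ineq_pos: fixes x y :: complex and a b :: real
  assumes a: "a > 0" and b: "b > 0"
  shows "(a - b)^2 / (a + b) * (cmod x)^2 \<le> (cmod (x * b + y))^2 / b + (cmod (x * a + y))^2 / a"
proof -
  obtain x1 x2 where x: "x = Complex x1 x2" by (cases x)
  obtain y1 y2 where y: "y = Complex y1 y2" by (cases y)
  define S where "S = (x1 * b + y1)^2 + (x2 * b + y2)^2"
  define T where "T = (x1 * a + y1)^2 + (x2 * a + y2)^2"
  have cs: "(cmod (x * b + y))^2 = S" "(cmod (x * a + y))^2 = T" "(cmod x)^2 = x1^2 + x2^2"
    unfolding S_def T_def x y by (simp_all add: cmod_power2)
  have id: "(a + b) * (a * S + b * T) - a * b * ((x1^2 + x2^2) * (a - b)^2)
      = (a * (x1 * b + y1) + b * (x1 * a + y1))^2 + (a * (x2 * b + y2) + b * (x2 * a + y2))^2"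
    unfolding S_def T_def by (simp add: power2_eq_square algebra_simps)
  have "0 \<le> (a * (x1 * b + y1) + b * (x1 * a + y1))^2 + (a * (x2 * b + y2) + b * (x2 * a + y2))^2" by simp
  hence ineq: "a * b * ((x1^2 + x2^2) * (a - b)^2) \<le> (a + b) * (a * S + b * T)" using id by linarith
  have ab: "a * b * (a + b) > 0" using a b by simp
  have "(a - b)^2 / (a + b) * (x1^2 + x2^2) = ((x1^2 + x2^2) * (a - b)^2) / (a + b)"
    by (simp add: mult.commute)
  also have "\<dots> = a * b * ((x1^2 + x2^2) * (a - b)^2) / (a * b * (a + b))"
    by (rule nonzero_mult_divide_mult_cancel_left[symmetric], insert a b, simp)
  also have "\<dots> \<le> (a + b) * (a * S + b * T) / (a * b * (a + b))"
    by (rule divide_right_mono[OF ineq], insert ab, simp)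
  also have "\<dots> = (a * S + b * T) / (a * b)"
    by (subst mult.commute[of "a*b"], rule nonzero_mult_divide_mult_cancel_left, insert a b, simp)
  also have "\<dots> = S / b + T / a" using a b by (simp add: add_divide_distrib)
  finally show ?thesis unfolding cs .
qed

lemma pair_ineq: fixes x y :: complex and a b :: real
  assumes a: "a \<ge> 0" and b: "b \<ge> 0" and ya: "a = 0 \<Longrightarrow> y = 0" and yb: "b = 0 \<Longrightarrow> y = 0"
  shows "(if a + b > 0 then (a - b)^2 / (a + b) * (cmod x)^2 else 0)
    \<le> (if b > 0 then (cmod (x * b + y))^2 / b else 0) + (if a > 0 then (cmod (cnj x * a + cnj y))^2 / a else 0)"
proof -
  have c: "cmod (cnj x * a + cnj y) = cmod (x * a + y)"
  proof -
    have "cnj x * a + cnj y = cnj (x * a + y)" by simp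
    thus ?thesis by (metis complex_mod_cnj)
  qed
  show ?thesis
  proof (cases "a > 0")
    case True note aT = this
    show ?thesis
    proof (cases "b > 0")
      case True thus ?thesis using aT pair_ineq_pos[OF aT True, of x y] c by simp
    next
      case False
      hence b0: "b = 0" using b by simp
      hence "y = 0" by (rule yb)
      thus ?thesis using aT b0 c by (simp add: norm_mult power2_eq_square field_simps)
    qed
  next
    case False
    hence a0: "a = 0" using a by simp
    hence y0: "y = 0" by (rule ya)
    show ?thesis
    proof (cases "b > 0")
      case True thus ?thesis using a0 y0 by (simp add: norm_mult power2_eq_square field_simps)
    next
      case False thus ?thesis using a0 b by simp
    qed
  qed
qed

lemma bessel: fixes y :: "nat \<Rightarrow> complex" and \<beta> :: "nat \<Rightarrow> nat \<Rightarrow> complex"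
  assumes orth: "\<And>l l'. l < n \<Longrightarrow> l' < n \<Longrightarrow> P l \<Longrightarrow> P l' \<Longrightarrow> (\<Sum>a<m. \<beta> l a * cnj (\<beta> l' a)) = (if l = l' then 1 else 0)"
  shows "(\<Sum>l<n. if P l then (cmod (\<Sum>a<m. y a * cnj (\<beta> l a)))^2 else 0) \<le> (\<Sum>a<m. (cmod (y a))^2)"
proof -
  define s where "s l = (\<Sum>a<m. y a * cnj (\<beta> l a))" for l
  define c where "c l = (if P l then s l else 0)" for l
  define z where "z a = (\<Sum>l<n. c l * \<beta> l a)" for a
  define Q where "Q = (\<Sum>l<n. if P l then s l * cnj (s l) else 0)"
  have T2: "(\<Sum>a<m. y a * cnj (z a)) = cnj Q"
  proof -
    have "(\<Sum>a<m. y a * cnj (z a)) = (\<Sum>a<m. \<Sum>l<n. cnj (c l) * (y a * cnj (\<beta> l a)))"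
      unfolding z_def by (simp add: cnj_sum sum_distrib_left mult_ac)
    also have "\<dots> = (\<Sum>l<n. cnj (c l) * s l)" unfolding s_def by (subst sum.swap, simp add: sum_distrib_left)
    also have "\<dots> = cnj Q" unfolding Q_def cnj_sum by (intro sum.cong refl, auto simp: c_def mult.commute)
    finally show ?thesis .
  qed
  have T3: "(\<Sum>a<m. z a * cnj (y a)) = Q"
  proof -
    have "(\<Sum>a<m. z a * cnj (y a)) = cnj (\<Sum>a<m. y a * cnj (z a))" by (simp add: cnj_sum mult.commute)
    thus ?thesis using T2 by simp
  qed
  have T4: "(\<Sum>a<m. z a * cnj (z a)) = Q"
  proof -
    have "(\<Sum>a<m. z a * cnj (z a)) = (\<Sum>a<m. \<Sum>l<n. \<Sum>l'<n. c l * cnj (c l') * (\<beta> l a * cnj (\<beta> l' a)))"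
      unfolding z_def by (intro sum.cong refl, subst pull2c', simp add: mult_ac)
    also have "\<dots> = (\<Sum>l<n. \<Sum>l'<n. \<Sum>a<m. c l * cnj (c l') * (\<beta> l a * cnj (\<beta> l' a)))"
      by (rule sum3_perm[symmetric])
    also have "\<dots> = (\<Sum>l<n. \<Sum>l'<n. c l * cnj (c l') * (\<Sum>a<m. \<beta> l a * cnj (\<beta> l' a)))"
      by (simp add: sum_distrib_left)
    also have "\<dots> = (\<Sum>l<n. \<Sum>l'<n. if l' = l then (if P l then s l * cnj (s l) else 0) else 0)"
    proof (intro sum.cong refl)
      fix l l' assume l: "l \<in> {..<n}" and l': "l' \<in> {..<n}"
      show "c l * cnj (c l') * (\<Sum>a<m. \<beta> l a * cnj (\<beta> l' a)) = (if l' = l then (if P l then s l * cnj (s l) else 0) else 0)"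
        using orth[of l l'] l l' unfolding c_def by auto
    qed
    also have "\<dots> = Q" unfolding Q_def by simp
    finally show ?thesis .
  qed
  have "(\<Sum>a<m. (y a - z a) * cnj (y a - z a)) = (\<Sum>a<m. y a * cnj (y a)) - (\<Sum>a<m. y a * cnj (z a)) - (\<Sum>a<m. z a * cnj (y a)) + (\<Sum>a<m. z a * cnj (z a))"
    by (simp add: algebra_simps sum.distrib sum_subtractf)
  also have "\<dots> = (\<Sum>a<m. y a * cnj (y a)) - Q"
  proof -
    have "Q = cnj Q" unfolding Q_def by (simp add: cnj_sum if_distrib mult.commute cong: if_cong)
    thus ?thesis unfolding T2 T3 T4 by simp
  qed
  finally have e: "(\<Sum>a<m. (y a - z a) * cnj (y a - z a)) = (\<Sum>a<m. y a * cnj (y a)) - Q" .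
  have "0 \<le> (\<Sum>a<m. (cmod (y a - z a))^2)" by (simp add: sum_nonneg)
  also have "\<dots> = Re (\<Sum>a<m. (y a - z a) * cnj (y a - z a))" by (simp add: cmod_sq Re_sum)
  also have "\<dots> = (\<Sum>a<m. (cmod (y a))^2) - (\<Sum>l<n. if P l then (cmod (s l))^2 else 0)"
    unfolding e Q_def by (simp add: cmod_sq Re_sum if_distrib cong: if_cong)
  finally show ?thesis unfolding s_def by simp
qed



lemma pull3: "c * (\<Sum>i<N. f i) * (\<Sum>j<M. g j) = (\<Sum>i<N. \<Sum>j<M. c * (f i * (g j :: complex)))"
proof -
  have "c * (\<Sum>i<N. f i) * (\<Sum>j<M. g j) = c * (\<Sum>i<N. \<Sum>j<M. f i * g j)"
    by (simp add: sum_product mult.assoc)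
  also have "\<dots> = (\<Sum>i<N. \<Sum>j<M. c * (f i * g j))" by (simp add: sum_distrib_left)
  finally show ?thesis .
qed

lemma core:
  fixes n m :: nat and \<psi> :: "nat \<Rightarrow> complex vec" and HS :: "complex mat"
    and f G' :: "nat \<Rightarrow> nat \<Rightarrow> complex" and p :: "nat \<Rightarrow> real"
  assumes psi: "onb n \<psi>" and HSh: "hermitian_mat n HS"
    and pnn: "\<And>l. l < n \<Longrightarrow> p l \<ge> 0"
    and ptr: "\<And>i k. i < n \<Longrightarrow> k < n \<Longrightarrow> (\<Sum>a<m. f i a * cnj (f k a)) = (\<Sum>l<n. complex_of_real (p l) * (\<psi> l $ i * cnj (\<psi> l $ k)))"
    and Gh: "\<And>a a'. a < m \<Longrightarrow> a' < m \<Longrightarrow> cnj (G' a a') = G' a' a"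
  shows "qf n p \<psi> HS \<le> 4 * (\<Sum>i<n. \<Sum>a<m. (cmod (bb n m HS f G' i a))^2)"
proof -
  have HS: "HS \<in> carrier_mat n n" using HSh unfolding hermitian_mat_def by auto
  have pc: "\<And>j. j < n \<Longrightarrow> \<psi> j \<in> carrier_vec n" using psi unfolding onb_def by auto
  define \<alpha> where "\<alpha> = alpha n \<psi> f"
  have \<alpha>_def': "\<alpha> j a = (\<Sum>i<n. cnj (\<psi> j $ i) * f i a)" for j a unfolding \<alpha>_def alpha_def[OF psi HS] ..
  define h where "h = hh \<psi> HS"
  have h_def': "h k j = braket (\<psi> k) HS (\<psi> j)" for k j unfolding h_def hh_def[OF psi HS] ..
  define B where "B = BB n m \<psi> HS f G'"
  have B_def': "B k a = (\<Sum>j<n. h k j * \<alpha> j a) + (\<Sum>a'<m. G' a a' * \<alpha> k a')" for k a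
    unfolding B_def BB_def[OF psi HS] h_def \<alpha>_def ..
  have aorth: "(\<Sum>a<m. \<alpha> j a * cnj (\<alpha> k a)) = (if j = k then complex_of_real (p j) else 0)"
    if j: "j < n" and k: "k < n" for j k
  proof -
    have "(\<Sum>a<m. \<alpha> j a * cnj (\<alpha> k a)) = (\<Sum>a<m. \<Sum>i<n. \<Sum>i'<n. cnj (\<psi> j $ i) * f i a * cnj (cnj (\<psi> k $ i') * f i' a))"
      unfolding \<alpha>_def' by (intro sum.cong refl, subst pull2c', simp add: mult_ac)
    also have "\<dots> = (\<Sum>i<n. \<Sum>i'<n. \<Sum>a<m. cnj (\<psi> j $ i) * f i a * cnj (cnj (\<psi> k $ i') * f i' a))"
      by (rule sum3_perm[symmetric])
    also have "\<dots> = (\<Sum>i<n. \<Sum>i'<n. cnj (\<psi> j $ i) * \<psi> k $ i' * (\<Sum>a<m. f i a * cnj (f i' a)))"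
      by (simp add: sum_distrib_left mult_ac)
    also have "\<dots> = (\<Sum>i<n. \<Sum>i'<n. cnj (\<psi> j $ i) * \<psi> k $ i' * (\<Sum>l<n. complex_of_real (p l) * (\<psi> l $ i * cnj (\<psi> l $ i'))))"
      by (intro sum.cong refl, simp add: ptr)
    also have "\<dots> = (\<Sum>i<n. \<Sum>i'<n. \<Sum>l<n. complex_of_real (p l) * ((\<psi> l $ i * cnj (\<psi> j $ i)) * (\<psi> k $ i' * cnj (\<psi> l $ i'))))"
      by (intro sum.cong refl, simp add: sum_distrib_left mult_ac)
    also have "\<dots> = (\<Sum>l<n. \<Sum>i<n. \<Sum>i'<n. complex_of_real (p l) * ((\<psi> l $ i * cnj (\<psi> j $ i)) * (\<psi> k $ i' * cnj (\<psi> l $ i'))))"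
      by (rule sum3_perm)
    also have "\<dots> = (\<Sum>l<n. complex_of_real (p l) * (\<Sum>i<n. \<psi> l $ i * cnj (\<psi> j $ i)) * (\<Sum>i'<n. \<psi> k $ i' * cnj (\<psi> l $ i')))"
      by (intro sum.cong refl, rule pull3[symmetric])
    also have "\<dots> = (\<Sum>l<n. complex_of_real (p l) * (if l = j then 1 else 0) * (if k = l then 1 else 0))"
      by (intro sum.cong refl, simp add: onb_inner[OF psi] j k)
    also have "\<dots> = (if j = k then complex_of_real (p j) else 0)"
      using j by (auto simp: if_distrib cong: if_cong)
    finally show ?thesis .
  qed
  have azero: "\<alpha> j a = 0" if j: "j < n" and pj: "p j = 0" and a: "a < m" for j a
  proof -
    have "complex_of_real (\<Sum>a<m. (cmod (\<alpha> j a))^2) = (\<Sum>a<m. \<alpha> j a * cnj (\<alpha> j a))"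
      unfolding of_real_sum by (intro sum.cong refl, rule complex_norm_square)
    also have "\<dots> = 0" using aorth[OF j j] pj by simp
    finally have "(\<Sum>a<m. (cmod (\<alpha> j a))^2) = 0" by (metis of_real_eq_0_iff)
    hence "\<forall>a\<in>{..<m}. (cmod (\<alpha> j a))^2 = 0" by (subst (asm) sum_nonneg_eq_0_iff, auto)
    thus ?thesis using a by auto
  qed
  define g where "g l k = (\<Sum>a<m. (\<Sum>a'<m. G' a a' * \<alpha> k a') * cnj (\<alpha> l a))" for l k
  have gamma: "(\<Sum>a<m. B k a * cnj (\<alpha> l a)) = h k l * complex_of_real (p l) + g l k" if k: "k < n" and l: "l < n" for k l
  proof -
    have "(\<Sum>a<m. (\<Sum>j<n. h k j * \<alpha> j a) * cnj (\<alpha> l a)) = (\<Sum>a<m. \<Sum>j<n. h k j * (\<alpha> j a * cnj (\<alpha> l a)))"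
      by (intro sum.cong refl, simp add: sum_distrib_left sum_distrib_right mult_ac)
    also have "\<dots> = (\<Sum>j<n. h k j * (\<Sum>a<m. \<alpha> j a * cnj (\<alpha> l a)))"
      by (subst sum.swap, simp add: sum_distrib_left)
    also have "\<dots> = (\<Sum>j<n. if j = l then h k j * complex_of_real (p j) else 0)"
      by (intro sum.cong refl, simp add: aorth l)
    also have "\<dots> = h k l * complex_of_real (p l)" using l by simp
    finally have 1: "(\<Sum>a<m. (\<Sum>j<n. h k j * \<alpha> j a) * cnj (\<alpha> l a)) = h k l * complex_of_real (p l)" .
    show ?thesis unfolding B_def' g_def 1[symmetric] by (simp add: distrib_right sum.distrib)
  qed
  have gherm: "g k l = cnj (g l k)" for k l
  proof -
    have "cnj (g l k) = (\<Sum>a<m. \<Sum>a'<m. cnj (G' a a') * cnj (\<alpha> k a') * \<alpha> l a)"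
      unfolding g_def by (simp add: cnj_sum sum_distrib_right)
    also have "\<dots> = (\<Sum>a<m. \<Sum>a'<m. G' a' a * cnj (\<alpha> k a') * \<alpha> l a)"
      by (intro sum.cong refl, simp add: Gh)
    also have "\<dots> = (\<Sum>a'<m. \<Sum>a<m. G' a' a * cnj (\<alpha> k a') * \<alpha> l a)" by (rule sum.swap)
    also have "\<dots> = g k l" unfolding g_def by (intro sum.cong refl, simp add: sum_distrib_left sum_distrib_right mult_ac)
    finally show ?thesis by simp
  qed
  have gzero: "g l k = 0" if "l < n" "k < n" "p k = 0 \<or> p l = 0" for l k
    using that azero unfolding g_def by auto
  have hherm: "h l k = cnj (h k l)" if "k < n" "l < n" for k l
  proof -
    have "h l k = (HS *\<^sub>v \<psi> k) \<bullet>c \<psi> l" unfolding h_def' braket_def ..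
    also have "\<dots> = \<psi> k \<bullet>c (HS *\<^sub>v \<psi> l)" by (rule herm_inner[OF HSh pc pc], insert that, auto)
    also have "\<dots> = cnj ((HS *\<^sub>v \<psi> l) \<bullet>c \<psi> k)" by (rule cnj_inner[symmetric], insert that HS pc, auto)
    finally show ?thesis unfolding h_def' braket_def .
  qed
  define T where "T k l = (if p l > 0 then (cmod (h k l * complex_of_real (p l) + g l k))^2 / p l else 0)" for k l
  have bes: "(\<Sum>l<n. T k l) \<le> (\<Sum>a<m. (cmod (B k a))^2)" if k: "k < n" for k
  proof -
    define \<beta> where "\<beta> l a = complex_of_real (1 / sqrt (p l)) * \<alpha> l a" for l a
    have orth: "(\<Sum>a<m. \<beta> l a * cnj (\<beta> l' a)) = (if l = l' then 1 else 0)"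
      if l: "l < n" and l': "l' < n" and P: "p l > 0" and P': "p l' > 0" for l l'
    proof -
      have e1: "(\<Sum>a<m. \<beta> l a * cnj (\<beta> l' a)) = complex_of_real (1 / sqrt (p l) * (1 / sqrt (p l'))) * (\<Sum>a<m. \<alpha> l a * cnj (\<alpha> l' a))"
        unfolding \<beta>_def by (simp add: sum_distrib_left mult_ac)
      show ?thesis
      proof (cases "l = l'")
        case True
        have sq: "sqrt (p l) * sqrt (p l) = p l" using P by simp
        have "1 / sqrt (p l) * (1 / sqrt (p l)) * p l = 1" using P sq by (simp add: field_simps)
        hence "complex_of_real (1 / sqrt (p l) * (1 / sqrt (p l))) * complex_of_real (p l) = 1"
          by (metis of_real_1 of_real_mult)
        thus ?thesis unfolding e1 using aorth[OF l l] True by simp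
      next
        case False thus ?thesis unfolding e1 using aorth[OF l l'] by simp
      qed
    qed
    have "(\<Sum>l<n. if p l > 0 then (cmod (\<Sum>a<m. B k a * cnj (\<beta> l a)))^2 else 0) \<le> (\<Sum>a<m. (cmod (B k a))^2)"
      by (rule bessel, rule orth, auto)
    moreover have "(\<Sum>l<n. if p l > 0 then (cmod (\<Sum>a<m. B k a * cnj (\<beta> l a)))^2 else 0) = (\<Sum>l<n. T k l)"
    proof (intro sum.cong refl)
      fix l assume l: "l \<in> {..<n}"
      have "(\<Sum>a<m. B k a * cnj (\<beta> l a)) = complex_of_real (1 / sqrt (p l)) * (\<Sum>a<m. B k a * cnj (\<alpha> l a))"
        unfolding \<beta>_def by (simp add: sum_distrib_left mult_ac)
      also have "\<dots> = complex_of_real (1 / sqrt (p l)) * (h k l * complex_of_real (p l) + g l k)"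
        using gamma k l by simp
      finally have e: "(\<Sum>a<m. B k a * cnj (\<beta> l a)) = complex_of_real (1 / sqrt (p l)) * (h k l * complex_of_real (p l) + g l k)" .
      show "(if p l > 0 then (cmod (\<Sum>a<m. B k a * cnj (\<beta> l a)))^2 else 0) = T k l"
      proof (cases "p l > 0")
        case True
        have "(cmod (\<Sum>a<m. B k a * cnj (\<beta> l a)))^2 = (1 / sqrt (p l))^2 * (cmod (h k l * complex_of_real (p l) + g l k))^2"
          unfolding e norm_mult by (simp only: norm_of_real power_mult_distrib power2_abs)
        also have "(1 / sqrt (p l))^2 = 1 / p l" using True by (simp add: power_divide)
        finally show ?thesis using True unfolding T_def by simp
      next
        case False thus ?thesis unfolding T_def by simp
      qed
    qed
    ultimately show ?thesis by simp
  qed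
  have tot: "(\<Sum>k<n. \<Sum>l<n. T k l) \<le> (\<Sum>i<n. \<Sum>a<m. (cmod (bb n m HS f G' i a))^2)"
  proof -
    have "(\<Sum>k<n. \<Sum>l<n. T k l) \<le> (\<Sum>k<n. \<Sum>a<m. (cmod (B k a))^2)" by (rule sum_mono, rule bes, simp)
    also have "\<dots> = (\<Sum>i<n. \<Sum>a<m. (cmod (bb n m HS f G' i a))^2)" unfolding B_def by (rule decomp[OF psi HS, symmetric])
    finally show ?thesis .
  qed
  define R where "R k l = (if p k + p l > 0 then (p k - p l)^2 / (p k + p l) * (cmod (h k l))^2 else 0)" for k l
  have pair: "R k l \<le> T k l + T l k" if k: "k < n" and l: "l < n" for k l
  proof -
    have "R k l \<le> (if p l > 0 then (cmod (h k l * complex_of_real (p l) + g l k))^2 / p l else 0)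
        + (if p k > 0 then (cmod (cnj (h k l) * complex_of_real (p k) + cnj (g l k)))^2 / p k else 0)"
      unfolding R_def by (rule pair_ineq, insert pnn k l gzero k l, auto)
    moreover have "T l k = (if p k > 0 then (cmod (cnj (h k l) * complex_of_real (p k) + cnj (g l k)))^2 / p k else 0)"
      unfolding T_def using hherm[OF k l] gherm[of k l] by simp
    moreover have "T k l = (if p l > 0 then (cmod (h k l * complex_of_real (p l) + g l k))^2 / p l else 0)"
      unfolding T_def ..
    ultimately show ?thesis by linarith
  qed
  have "qf n p \<psi> HS = 2 * (\<Sum>k<n. \<Sum>l<n. R k l)" unfolding qf_def R_def h_def' ..
  also have "\<dots> \<le> 2 * (\<Sum>k<n. \<Sum>l<n. T k l + T l k)"
    by (intro mult_left_mono sum_mono pair, auto)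
  also have "(\<Sum>k<n. \<Sum>l<n. T k l + T l k) = 2 * (\<Sum>k<n. \<Sum>l<n. T k l)"
  proof -
    have "(\<Sum>k<n. \<Sum>l<n. T l k) = (\<Sum>k<n. \<Sum>l<n. T k l)" by (rule sum.swap)
    thus ?thesis by (simp add: sum.distrib)
  qed
  finally show ?thesis using tot by linarith
qed


lemma var_formula: assumes H: "hermitian_mat N H" and Phic: "\<Phi> \<in> carrier_vec N"
  shows "variance H \<Phi> = Re ((H *\<^sub>v \<Phi>) \<bullet>c (H *\<^sub>v \<Phi>)) - (Re ((H *\<^sub>v \<Phi>) \<bullet>c \<Phi>))^2"
proof -
  have HN: "H \<in> carrier_mat N N" using H unfolding hermitian_mat_def by auto
  have HPc: "H *\<^sub>v \<Phi> \<in> carrier_vec N" using HN Phic by auto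
  have "braket \<Phi> (H * H) \<Phi> = (H *\<^sub>v (H *\<^sub>v \<Phi>)) \<bullet>c \<Phi>"
    unfolding braket_def using HN Phic by simp
  also have "\<dots> = (H *\<^sub>v \<Phi>) \<bullet>c (H *\<^sub>v \<Phi>)" by (rule herm_inner[OF H HPc Phic])
  finally have v2: "braket \<Phi> (H * H) \<Phi> = (H *\<^sub>v \<Phi>) \<bullet>c (H *\<^sub>v \<Phi>)" .
  show ?thesis unfolding variance_def v2 unfolding braket_def ..
qed

lemma re_expand: "(cmod (w - complex_of_real l * x))^2 = (cmod w)^2 - 2 * l * Re (w * cnj x) + l^2 * (cmod x)^2"
proof -
  obtain w1 w2 where w: "w = Complex w1 w2" by (cases w)
  obtain x1 x2 where x: "x = Complex x1 x2" by (cases x)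
  show ?thesis unfolding w x cmod_power2 by (simp add: power2_eq_square algebra_simps)
qed

lemma var_shift: assumes H: "hermitian_mat N H" and Phic: "\<Phi> \<in> carrier_vec N" and Phi1: "\<Phi> \<bullet>c \<Phi> = 1"
  shows "variance H \<Phi> = (\<Sum>x<N. (cmod ((H *\<^sub>v \<Phi>) $ x - complex_of_real (Re ((H *\<^sub>v \<Phi>) \<bullet>c \<Phi>)) * \<Phi> $ x))^2)"
proof -
  have HN: "H \<in> carrier_mat N N" using H unfolding hermitian_mat_def by auto
  have HPc: "H *\<^sub>v \<Phi> \<in> carrier_vec N" using HN Phic by auto
  define l where "l = Re ((H *\<^sub>v \<Phi>) \<bullet>c \<Phi>)"
  define w where "w = H *\<^sub>v \<Phi>"
  have "(\<Sum>x<N. (cmod (w $ x - complex_of_real l * \<Phi> $ x))^2)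
      = (\<Sum>x<N. (cmod (w $ x))^2) - 2 * l * (\<Sum>x<N. Re (w $ x * cnj (\<Phi> $ x))) + l^2 * (\<Sum>x<N. (cmod (\<Phi> $ x))^2)"
    by (simp only: re_expand sum.distrib sum_subtractf sum_distrib_left)
  also have "(\<Sum>x<N. (cmod (w $ x))^2) = Re (w \<bullet>c w)" using self_inner_Re(1)[of w N] HPc unfolding w_def by simp
  also have "(\<Sum>x<N. Re (w $ x * cnj (\<Phi> $ x))) = l" unfolding l_def w_def
    using cinner_sum[OF HPc Phic] by (simp add: Re_sum)
  also have "(\<Sum>x<N. (cmod (\<Phi> $ x))^2) = 1" using self_inner_Re(1)[OF Phic] Phi1 by simp
  finally have "(\<Sum>x<N. (cmod (w $ x - complex_of_real l * \<Phi> $ x))^2) = Re (w \<bullet>c w) - l^2"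
    by (simp add: power2_eq_square)
  moreover have lw: "l = Re (w \<bullet>c \<Phi>)" unfolding l_def w_def ..
  ultimately show ?thesis unfolding var_formula[OF H Phic] w_def[symmetric] by simp
qed

lemma density_p: assumes d: "density_mat n \<rho>" and sd: "spectral_decomp n \<rho> p \<psi>"
  shows "\<And>j. j < n \<Longrightarrow> p j \<ge> 0" "(\<Sum>j<n. p j) = 1"
proof -
  have psi: "onb n \<psi>" and rep: "\<rho> = mat n n (\<lambda>(a,b). \<Sum>l<n. complex_of_real (p l) * (\<psi> l $ a * cnj (\<psi> l $ b)))"
    using spectral_decompD[OF sd] by auto
  have pc: "\<And>j. j < n \<Longrightarrow> \<psi> j \<in> carrier_vec n" using psi unfolding onb_def by auto
  have rc: "\<rho> \<in> carrier_mat n n" using d unfolding density_mat_def hermitian_mat_def by auto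
  fix j assume j: "j < n"
  have "(\<rho> *\<^sub>v \<psi> j) \<bullet>c \<psi> j = (\<Sum>a<n. (\<Sum>b<n. \<rho> $$ (a,b) * \<psi> j $ b) * cnj (\<psi> j $ a))"
    using rc pc[OF j] by (subst cinner_sum[of _ n], auto intro!: sum.cong simp: mulv_sum[OF rc pc[OF j]] simp del: index_mult_mat_vec)
  also have "\<dots> = (\<Sum>a<n. \<Sum>b<n. \<Sum>l<n. complex_of_real (p l) * ((\<psi> l $ a * cnj (\<psi> j $ a)) * (\<psi> j $ b * cnj (\<psi> l $ b))))"
    by (intro sum.cong refl, subst rep, simp add: sum_distrib_left sum_distrib_right mult_ac)
  also have "\<dots> = (\<Sum>l<n. \<Sum>a<n. \<Sum>b<n. complex_of_real (p l) * ((\<psi> l $ a * cnj (\<psi> j $ a)) * (\<psi> j $ b * cnj (\<psi> l $ b))))"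
    by (rule sum3_perm)
  also have "\<dots> = (\<Sum>l<n. complex_of_real (p l) * (\<Sum>a<n. \<psi> l $ a * cnj (\<psi> j $ a)) * (\<Sum>b<n. \<psi> j $ b * cnj (\<psi> l $ b)))"
    by (intro sum.cong refl, rule pull3[symmetric])
  also have "\<dots> = (\<Sum>l<n. if l = j then complex_of_real (p l) else 0)"
    by (intro sum.cong refl, auto simp: onb_inner[OF psi] j)
  also have "\<dots> = complex_of_real (p j)" using j by simp
  finally have "(\<rho> *\<^sub>v \<psi> j) \<bullet>c \<psi> j = complex_of_real (p j)" .
  moreover have "0 \<le> Re ((\<rho> *\<^sub>v \<psi> j) \<bullet>c \<psi> j)" using d pc[OF j] unfolding density_mat_def by auto
  ultimately show "p j \<ge> 0" by simp
next
  have psi: "onb n \<psi>" and rep: "\<rho> = mat n n (\<lambda>(a,b). \<Sum>l<n. complex_of_real (p l) * (\<psi> l $ a * cnj (\<psi> l $ b)))"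
    using spectral_decompD[OF sd] by auto
  have rc: "\<rho> \<in> carrier_mat n n" using d unfolding density_mat_def hermitian_mat_def by auto
  have "1 = mat_trace \<rho>" using d unfolding density_mat_def by auto
  also have "\<dots> = (\<Sum>a<n. \<Sum>l<n. complex_of_real (p l) * (\<psi> l $ a * cnj (\<psi> l $ a)))"
    unfolding mat_trace_def by (simp add: rep)
  also have "\<dots> = (\<Sum>l<n. complex_of_real (p l) * (\<Sum>a<n. \<psi> l $ a * cnj (\<psi> l $ a)))"
    by (subst sum.swap, simp add: sum_distrib_left)
  also have "\<dots> = (\<Sum>l<n. complex_of_real (p l))" by (intro sum.cong refl, simp add: onb_inner[OF psi])
  finally show "(\<Sum>j<n. p j) = 1" by (metis of_real_eq_1_iff of_real_sum)
qed

lemma herm_one: "hermitian_mat n (1\<^sub>m n)" unfolding hermitian_mat_def by auto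

lemma tensor_herm: assumes A: "hermitian_mat n A" and B: "hermitian_mat m B"
  shows "hermitian_mat (n*m) (tensor_mat A B)"
proof -
  have Ac: "A \<in> carrier_mat n n" and Bc: "B \<in> carrier_mat m m" using A B unfolding hermitian_mat_def by auto
  show ?thesis unfolding hermitian_mat_def
  proof (intro conjI allI impI)
    show "tensor_mat A B \<in> carrier_mat (n*m) (n*m)" unfolding tensor_mat_def using Ac Bc by auto
  next
    fix x y assume x: "x < n*m" and y: "y < n*m"
    have m0: "m > 0" using x by (cases m, auto)
    have d: "x div m < n" "y div m < n" using x y m0 by (auto simp: div_less_iff_less_mult mult.commute)
    have md: "x mod m < m" "y mod m < m" using m0 by auto
    show "tensor_mat A B $$ (x,y) = cnj (tensor_mat A B $$ (y,x))"
      unfolding tensor_mat_def using Ac Bc x y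
      by (simp add: herm_cnj[OF A d(2) d(1)] herm_cnj[OF B md(2) md(1)])
  qed
qed

lemma Htot_herm: assumes "hermitian_mat n HS" "hermitian_mat m G"
  shows "hermitian_mat (n*m) (H_tot n m HS G)"
proof -
  have 1: "hermitian_mat (n*m) (tensor_mat HS (1\<^sub>m m))" by (rule tensor_herm[OF assms(1) herm_one])
  have 2: "hermitian_mat (n*m) (tensor_mat (1\<^sub>m n) G)" by (rule tensor_herm[OF herm_one assms(2)])
  have c1: "tensor_mat HS (1\<^sub>m m) \<in> carrier_mat (n*m) (n*m)" and c2: "tensor_mat (1\<^sub>m n) G \<in> carrier_mat (n*m) (n*m)"
    using 1 2 unfolding hermitian_mat_def by auto
  show ?thesis unfolding hermitian_mat_def H_tot_def
  proof (intro conjI allI impI)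
    show "tensor_mat HS (1\<^sub>m m) + tensor_mat (1\<^sub>m n) G \<in> carrier_mat (n*m) (n*m)" using c1 c2 by auto
  next
    fix x y assume x: "x < n*m" and y: "y < n*m"
    have "(tensor_mat HS (1\<^sub>m m) + tensor_mat (1\<^sub>m n) G) $$ (x,y) = tensor_mat HS (1\<^sub>m m) $$ (x,y) + tensor_mat (1\<^sub>m n) G $$ (x,y)"
      using c1 c2 x y by simp
    also have "\<dots> = cnj (tensor_mat HS (1\<^sub>m m) $$ (y,x)) + cnj (tensor_mat (1\<^sub>m n) G $$ (y,x))"
      using herm_cnj[OF 1 y x] herm_cnj[OF 2 y x] by simp
    also have "\<dots> = cnj ((tensor_mat HS (1\<^sub>m m) + tensor_mat (1\<^sub>m n) G) $$ (y,x))"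
      using c1 c2 x y by simp
    finally show "(tensor_mat HS (1\<^sub>m m) + tensor_mat (1\<^sub>m n) G) $$ (x,y) = cnj ((tensor_mat HS (1\<^sub>m m) + tensor_mat (1\<^sub>m n) G) $$ (y,x))" .
  qed
qed


lemma ptrace_entry: assumes Phic: "\<Phi> \<in> carrier_vec (n*m)" and i: "i < n" and k: "k < n"
  shows "ptrace2 n m (ketbra \<Phi> \<Phi>) $$ (i,k) = (\<Sum>a<m. \<Phi> $ (i*m+a) * cnj (\<Phi> $ (k*m+a)))"
  unfolding ptrace2_def ketbra_def using Phic i k idx_lt[OF i] idx_lt[OF k]
  by (auto intro!: sum.cong)

lemma main_ineq: assumes HSh: "hermitian_mat n HS" and Gh: "hermitian_mat m G"
  and sd: "spectral_decomp n \<rho> p \<psi>" and pnn: "\<And>l. l < n \<Longrightarrow> p l \<ge> 0"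
  and pur: "purification n m \<rho> \<Phi>"
  shows "qf n p \<psi> HS \<le> 4 * variance (H_tot n m HS G) \<Phi>"
proof -
  have HS: "HS \<in> carrier_mat n n" using HSh unfolding hermitian_mat_def by auto
  have Gc: "G \<in> carrier_mat m m" using Gh unfolding hermitian_mat_def by auto
  have Phic: "\<Phi> \<in> carrier_vec (n*m)" and Phi1: "\<Phi> \<bullet>c \<Phi> = 1" and ptr0: "ptrace2 n m (ketbra \<Phi> \<Phi>) = \<rho>"
    using pur unfolding purification_def by auto
  have psi: "onb n \<psi>" and rep: "\<rho> = mat n n (\<lambda>(a,b). \<Sum>l<n. complex_of_real (p l) * (\<psi> l $ a * cnj (\<psi> l $ b)))"
    using spectral_decompD[OF sd] by auto
  define H where "H = H_tot n m HS G"
  have Hh: "hermitian_mat (n*m) H" unfolding H_def by (rule Htot_herm[OF HSh Gh])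
  define l where "l = Re ((H *\<^sub>v \<Phi>) \<bullet>c \<Phi>)"
  define f where "f i a = \<Phi> $ (i*m+a)" for i a
  define G' where "G' a a' = G$$(a,a') - (if a = a' then complex_of_real l else 0)" for a a'
  have ptr: "(\<Sum>a<m. f i a * cnj (f k a)) = (\<Sum>l<n. complex_of_real (p l) * (\<psi> l $ i * cnj (\<psi> l $ k)))"
    if i: "i < n" and k: "k < n" for i k
  proof -
    have "(\<Sum>a<m. f i a * cnj (f k a)) = ptrace2 n m (ketbra \<Phi> \<Phi>) $$ (i,k)"
      unfolding f_def by (rule ptrace_entry[OF Phic i k, symmetric])
    also have "\<dots> = \<rho> $$ (i,k)" unfolding ptr0 ..
    also have "\<dots> = (\<Sum>l<n. complex_of_real (p l) * (\<psi> l $ i * cnj (\<psi> l $ k)))"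
      by (subst rep, insert i k, simp)
    finally show ?thesis .
  qed
  have G'h: "cnj (G' a a') = G' a' a" if "a < m" "a' < m" for a a'
    unfolding G'_def using herm_cnj[OF Gh that] by auto
  have "qf n p \<psi> HS \<le> 4 * (\<Sum>i<n. \<Sum>a<m. (cmod (bb n m HS f G' i a))^2)"
    by (rule core[OF psi HSh pnn ptr G'h])
  also have "(\<Sum>i<n. \<Sum>a<m. (cmod (bb n m HS f G' i a))^2)
      = (\<Sum>i<n. \<Sum>a<m. (cmod ((H *\<^sub>v \<Phi>) $ (i*m+a) - complex_of_real l * \<Phi> $ (i*m+a)))^2)"
  proof (intro sum.cong refl)
    fix i a assume i: "i \<in> {..<n}" and a: "a \<in> {..<m}"
    have "bb n m HS f G' i a = (\<Sum>i'<n. HS$$(i,i') * f i' a) + (\<Sum>a'<m. G' a a' * f i a')"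
      by (rule bb_def[OF psi HS])
    also have "(\<Sum>a'<m. G' a a' * f i a') = (\<Sum>a'<m. G$$(a,a') * f i a') - complex_of_real l * f i a"
    proof -
      have "(\<Sum>a'<m. G' a a' * f i a') = (\<Sum>a'<m. G$$(a,a') * f i a' - (if a' = a then complex_of_real l * f i a' else 0))"
        unfolding G'_def by (intro sum.cong refl, auto simp: algebra_simps)
      also have "\<dots> = (\<Sum>a'<m. G$$(a,a') * f i a') - complex_of_real l * f i a"
        using a by (simp add: sum_subtractf)
      finally show ?thesis .
    qed
    also have "(\<Sum>i'<n. HS$$(i,i') * f i' a) + ((\<Sum>a'<m. G$$(a,a') * f i a') - complex_of_real l * f i a)
        = (H *\<^sub>v \<Phi>) $ (i*m+a) - complex_of_real l * \<Phi> $ (i*m+a)"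
      unfolding H_def f_def using Htot_mulv[OF HS Gc Phic, of i a] i a by simp
    finally show "(cmod (bb n m HS f G' i a))^2 = (cmod ((H *\<^sub>v \<Phi>) $ (i*m+a) - complex_of_real l * \<Phi> $ (i*m+a)))^2"
      by simp
  qed
  also have "\<dots> = (\<Sum>x<n*m. (cmod ((H *\<^sub>v \<Phi>) $ x - complex_of_real l * \<Phi> $ x))^2)"
    by (rule double_sum[symmetric])
  also have "\<dots> = variance H \<Phi>" unfolding l_def by (rule var_shift[OF Hh Phic Phi1, symmetric])
  finally show ?thesis unfolding H_def .
qed


lemma sq_ident: fixes s t :: real assumes s: "s \<ge> 0" and t: "t \<ge> 0" and st: "s^2 + t^2 > 0"
  shows "(s - 2 * s * t / (s^2 + t^2) * t)^2 + (t - 2 * s * t / (s^2 + t^2) * s)^2 = (s^2 - t^2)^2 / (s^2 + t^2)"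
proof -
  define D where "D = s^2 + t^2"
  have D: "D > 0" using st unfolding D_def .
  have e1: "s - 2 * s * t / D * t = s * (s^2 - t^2) / D"
  proof -
    have "s * (s^2 - t^2) = s * D - 2*s*t*t" unfolding D_def by (simp add: algebra_simps power2_eq_square)
    hence "s * (s^2 - t^2) / D = s * D / D - 2*s*t*t / D" by (simp add: diff_divide_distrib)
    thus ?thesis using D by simp
  qed
  have e2: "t - 2 * s * t / D * s = t * (t^2 - s^2) / D"
  proof -
    have "t * (t^2 - s^2) = t * D - 2*s*t*s" unfolding D_def by (simp add: algebra_simps power2_eq_square)
    hence "t * (t^2 - s^2) / D = t * D / D - 2*s*t*s / D" by (simp add: diff_divide_distrib)
    thus ?thesis using D by simp
  qed
  have "(s * (s^2 - t^2) / D)^2 + (t * (t^2 - s^2) / D)^2 = D * (s^2 - t^2)^2 / D^2"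
    unfolding D_def by (simp add: power_divide power2_eq_square add_divide_distrib[symmetric] algebra_simps)
  also have "\<dots> = (s^2 - t^2)^2 / D" using D by (simp add: power2_eq_square)
  finally show ?thesis unfolding D_def[symmetric] e1 e2 .
qed

lemma exist_part: assumes HSh: "hermitian_mat n HS"
  and sd: "spectral_decomp n \<rho> p \<psi>" and pnn: "\<And>l. l < n \<Longrightarrow> p l \<ge> 0" and psum: "(\<Sum>j<n. p j) = 1"
  shows "\<exists>G \<Phi>. hermitian_mat n G \<and> purification n n \<rho> \<Phi> \<and> 4 * variance (H_tot n n HS G) \<Phi> \<le> qf n p \<psi> HS"
proof -
  have HS: "HS \<in> carrier_mat n n" using HSh unfolding hermitian_mat_def by auto
  have psi: "onb n \<psi>" and rep: "\<rho> = mat n n (\<lambda>(a,b). \<Sum>l<n. complex_of_real (p l) * (\<psi> l $ a * cnj (\<psi> l $ b)))"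
    using spectral_decompD[OF sd] by auto
  have pc: "\<And>j. j < n \<Longrightarrow> \<psi> j \<in> carrier_vec n" using psi unfolding onb_def by auto
  define s where "s j = sqrt (p j)" for j
  have ss: "s j * s j = p j" if "j < n" for j unfolding s_def using pnn[OF that] by simp
  have s0: "s j \<ge> 0" if "j < n" for j unfolding s_def using pnn[OF that] by simp
  define h where "h k j = braket (\<psi> k) HS (\<psi> j)" for k j
  have hherm: "h l k = cnj (h k l)" if "k < n" "l < n" for k l
  proof -
    have "h l k = (HS *\<^sub>v \<psi> k) \<bullet>c \<psi> l" unfolding h_def braket_def ..
    also have "\<dots> = \<psi> k \<bullet>c (HS *\<^sub>v \<psi> l)" by (rule herm_inner[OF HSh pc pc], insert that, auto)
    also have "\<dots> = cnj ((HS *\<^sub>v \<psi> l) \<bullet>c \<psi> k)" by (rule cnj_inner[symmetric], insert that HS pc, auto)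
    finally show ?thesis unfolding h_def braket_def .
  qed
  define c where "c a k = (if p a + p k > 0 then 2 * s a * s k / (p a + p k) else 0)" for a k
  have csym: "c a k = c k a" for a k unfolding c_def by (simp add: add.commute mult.commute)
  define G where "G = mat n n (\<lambda>(a,k). - complex_of_real (c a k) * h k a)"
  have Gc: "G \<in> carrier_mat n n" unfolding G_def by simp
  have Gh: "hermitian_mat n G" unfolding hermitian_mat_def
  proof (intro conjI allI impI Gc)
    fix a k assume a: "a < n" and k: "k < n"
    show "G $$ (a,k) = cnj (G $$ (k,a))" unfolding G_def using a k hherm[OF a k] csym[of a k] by simp
  qed
  define \<Phi> where "\<Phi> = vec (n*n) (\<lambda>x. complex_of_real (s (x mod n)) * \<psi> (x mod n) $ (x div n))"
  have Phic: "\<Phi> \<in> carrier_vec (n*n)" unfolding \<Phi>_def by simp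
  have Phie: "\<Phi> $ (i*n+a) = complex_of_real (s a) * \<psi> a $ i" if "i < n" "a < n" for i a
    unfolding \<Phi>_def using that idx_lt[OF that] by (simp add: idx_div idx_mod)
  have Phi1: "\<Phi> \<bullet>c \<Phi> = 1"
  proof -
    have "\<Phi> \<bullet>c \<Phi> = (\<Sum>x<n*n. \<Phi> $ x * cnj (\<Phi> $ x))" by (rule cinner_sum[OF Phic Phic])
    also have "\<dots> = (\<Sum>i<n. \<Sum>a<n. \<Phi> $ (i*n+a) * cnj (\<Phi> $ (i*n+a)))" by (rule double_sum)
    also have "\<dots> = (\<Sum>i<n. \<Sum>a<n. complex_of_real (p a) * (\<psi> a $ i * cnj (\<psi> a $ i)))"
      by (intro sum.cong refl, simp add: Phie ss[symmetric] mult_ac)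
    also have "\<dots> = (\<Sum>a<n. complex_of_real (p a) * (\<Sum>i<n. \<psi> a $ i * cnj (\<psi> a $ i)))"
      by (subst sum.swap, simp add: sum_distrib_left)
    also have "\<dots> = (\<Sum>a<n. complex_of_real (p a))" by (intro sum.cong refl, simp add: onb_inner[OF psi])
    also have "\<dots> = 1" using psum by (metis of_real_1 of_real_sum)
    finally show ?thesis .
  qed
  have rc: "\<rho> \<in> carrier_mat n n" by (subst rep, simp)
  have ptr: "ptrace2 n n (ketbra \<Phi> \<Phi>) = \<rho>"
  proof (rule eq_matI)
    fix i k assume i: "i < dim_row \<rho>" and k: "k < dim_col \<rho>"
    hence i: "i < n" and k: "k < n" using rc by auto
    have "ptrace2 n n (ketbra \<Phi> \<Phi>) $$ (i,k) = (\<Sum>a<n. \<Phi> $ (i*n+a) * cnj (\<Phi> $ (k*n+a)))"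
      by (rule ptrace_entry[OF Phic i k])
    also have "\<dots> = (\<Sum>a<n. complex_of_real (p a) * (\<psi> a $ i * cnj (\<psi> a $ k)))"
      by (intro sum.cong refl, simp add: Phie i k ss[symmetric] mult_ac)
    also have "\<dots> = \<rho> $$ (i,k)" by (subst rep, insert i k, simp)
    finally show "ptrace2 n n (ketbra \<Phi> \<Phi>) $$ (i,k) = \<rho> $$ (i,k)" .
  qed (insert rc, auto simp: ptrace2_def)
  have pur: "purification n n \<rho> \<Phi>" unfolding purification_def using Phic Phi1 ptr by auto
  define H where "H = H_tot n n HS G"
  have Hh: "hermitian_mat (n*n) H" unfolding H_def by (rule Htot_herm[OF HSh Gh])
  define f where "f i a = \<Phi> $ (i*n+a)" for i a
  define G' where "G' a a' = G $$ (a,a')" for a a'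
  have HPc: "H *\<^sub>v \<Phi> \<in> carrier_vec (n*n)" using Hh Phic unfolding hermitian_mat_def by auto
  have "variance H \<Phi> \<le> Re ((H *\<^sub>v \<Phi>) \<bullet>c (H *\<^sub>v \<Phi>))"
    unfolding var_formula[OF Hh Phic] by simp
  also have "\<dots> = (\<Sum>x<n*n. (cmod ((H *\<^sub>v \<Phi>) $ x))^2)" by (rule self_inner_Re(1)[OF HPc])
  also have "\<dots> = (\<Sum>i<n. \<Sum>a<n. (cmod ((H *\<^sub>v \<Phi>) $ (i*n+a)))^2)" by (rule double_sum)
  also have "\<dots> = (\<Sum>i<n. \<Sum>a<n. (cmod (bb n n HS f G' i a))^2)"
  proof (intro sum.cong refl)
    fix i a assume i: "i \<in> {..<n}" and a: "a \<in> {..<n}"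
    show "(cmod ((H *\<^sub>v \<Phi>) $ (i*n+a)))^2 = (cmod (bb n n HS f G' i a))^2"
      unfolding bb_def[OF psi HS] H_def f_def G'_def using Htot_mulv[OF HS Gc Phic, of i a] i a by simp
  qed
  also have "\<dots> = (\<Sum>k<n. \<Sum>a<n. (cmod (BB n n \<psi> HS f G' k a))^2)" by (rule decomp[OF psi HS])
  also have "\<dots> = (\<Sum>k<n. \<Sum>a<n. (cmod (h k a))^2 * (s a - c a k * s k)^2)"
  proof (intro sum.cong refl)
    fix k a assume k: "k \<in> {..<n}" and a: "a \<in> {..<n}"
    have al: "alpha n \<psi> f j b = (if b = j then complex_of_real (s b) else 0)" if j: "j < n" and b: "b < n" for j b
    proof -
      have "alpha n \<psi> f j b = (\<Sum>i<n. complex_of_real (s b) * (\<psi> b $ i * cnj (\<psi> j $ i)))"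
        unfolding alpha_def[OF psi HS] f_def by (intro sum.cong refl, simp add: Phie b mult_ac)
      also have "\<dots> = complex_of_real (s b) * (if b = j then 1 else 0)"
        by (simp add: sum_distrib_left[symmetric] onb_inner[OF psi b j])
      finally show ?thesis by simp
    qed
    have "BB n n \<psi> HS f G' k a = (\<Sum>j<n. h k j * alpha n \<psi> f j a) + (\<Sum>a'<n. G' a a' * alpha n \<psi> f k a')"
      unfolding BB_def[OF psi HS] hh_def[OF psi HS] h_def ..
    also have "\<dots> = h k a * complex_of_real (s a) + G' a k * complex_of_real (s k)"
      using k a by (simp add: al if_distrib cong: if_cong)
    also have "\<dots> = h k a * complex_of_real (s a - c a k * s k)"
      unfolding G'_def G_def using k a by (simp add: algebra_simps)
    finally show "(cmod (BB n n \<psi> HS f G' k a))^2 = (cmod (h k a))^2 * (s a - c a k * s k)^2"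
      by (simp only: norm_mult power_mult_distrib norm_of_real power2_abs)
  qed
  finally have v: "variance H \<Phi> \<le> (\<Sum>k<n. \<Sum>a<n. (cmod (h k a))^2 * (s a - c a k * s k)^2)" .
  define U where "U k a = (cmod (h k a))^2 * (s a - c a k * s k)^2" for k a
  define R where "R k a = (if p k + p a > 0 then (p k - p a)^2 / (p k + p a) * (cmod (h k a))^2 else 0)" for k a
  have UR: "U k a + U a k = R k a" if k: "k < n" and a: "a < n" for k a
  proof -
    have hc: "cmod (h a k) = cmod (h k a)" using hherm[OF k a] by simp
    show ?thesis
    proof (cases "p k + p a > 0")
      case True
      have st: "(s a)^2 + (s k)^2 > 0" using True ss[OF a] ss[OF k] by (simp add: power2_eq_square add.commute)
      have cak: "c a k = 2 * s a * s k / ((s a)^2 + (s k)^2)" unfolding c_def using True ss[OF a] ss[OF k]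
        by (simp add: power2_eq_square add.commute)
      have "(s a - c a k * s k)^2 + (s k - c a k * s a)^2 = ((s a)^2 - (s k)^2)^2 / ((s a)^2 + (s k)^2)"
        unfolding cak by (rule sq_ident[OF s0[OF a] s0[OF k] st])
      also have "\<dots> = (p k - p a)^2 / (p k + p a)" using ss[OF a] ss[OF k]
        by (simp add: power2_eq_square algebra_simps)
      finally have e: "(s a - c a k * s k)^2 + (s k - c a k * s a)^2 = (p k - p a)^2 / (p k + p a)" .
      have "U k a + U a k = (cmod (h k a))^2 * ((s a - c a k * s k)^2 + (s k - c a k * s a)^2)"
        unfolding U_def hc csym[of k a] by (simp add: algebra_simps)
      thus ?thesis unfolding e R_def using True by simp
    next
      case False
      hence "p k = 0" "p a = 0" using pnn[OF k] pnn[OF a] by auto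
      hence "s k = 0" "s a = 0" unfolding s_def by auto
      thus ?thesis unfolding U_def R_def using False by simp
    qed
  qed
  have "qf n p \<psi> HS = 2 * (\<Sum>k<n. \<Sum>a<n. R k a)" unfolding qf_def R_def h_def ..
  also have "(\<Sum>k<n. \<Sum>a<n. R k a) = (\<Sum>k<n. \<Sum>a<n. U k a + U a k)" by (intro sum.cong refl, simp add: UR)
  also have "\<dots> = 2 * (\<Sum>k<n. \<Sum>a<n. U k a)"
  proof -
    have "(\<Sum>k<n. \<Sum>a<n. U a k) = (\<Sum>k<n. \<Sum>a<n. U k a)" by (rule sum.swap)
    thus ?thesis by (simp add: sum.distrib)
  qed
  finally have "qf n p \<psi> HS = 4 * (\<Sum>k<n. \<Sum>a<n. U k a)" by simp
  hence "4 * variance H \<Phi> \<le> qf n p \<psi> HS" using v unfolding U_def by simp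
  thus ?thesis using Gh pur unfolding H_def by blast
qed


lemma ketbra_herm: assumes "\<Phi> \<in> carrier_vec N" shows "hermitian_mat N (ketbra \<Phi> \<Phi>)"
  using assms unfolding hermitian_mat_def ketbra_def by auto

lemma pure_QFI: assumes HSh: "hermitian_mat n HS" and Gh: "hermitian_mat m HA" and pur: "purification n m \<rho> \<Phi>"
  shows "QFI (n*m) (ketbra \<Phi> \<Phi>) (H_tot n m HS HA) = 4 * variance (H_tot n m HS HA) \<Phi>"
proof -
  have Phic: "\<Phi> \<in> carrier_vec (n*m)" and Phi1: "\<Phi> \<bullet>c \<Phi> = 1" using pur unfolding purification_def by auto
  obtain p \<psi> where sd: "spectral_decomp (n*m) (ketbra \<Phi> \<Phi>) p \<psi>"
    and q: "QFI (n*m) (ketbra \<Phi> \<Phi>) (H_tot n m HS HA) = qf (n*m) p \<psi> (H_tot n m HS HA)"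
    using QFI_some[OF ketbra_herm[OF Phic]] by blast
  show ?thesis unfolding q by (rule pure_qf[OF Htot_herm[OF HSh Gh] Phic Phi1 sd])
qed

theorem theorem2:
  fixes n :: nat and HS \<rho> :: "complex mat"
  assumes "hermitian_mat n HS" and "density_mat n \<rho>"
  shows "(\<forall>m HA \<Phi>. hermitian_mat m HA \<and> purification n m \<rho> \<Phi> \<longrightarrow>
            QFI n \<rho> HS \<le> QFI (n*m) (ketbra \<Phi> \<Phi>) (H_tot n m HS HA)) \<and>
         (\<exists>m HA \<Phi>. hermitian_mat m HA \<and> purification n m \<rho> \<Phi> \<and>
            QFI n \<rho> HS = QFI (n*m) (ketbra \<Phi> \<Phi>) (H_tot n m HS HA)) \<and>
         (\<forall>m HA \<Phi>. hermitian_mat m HA \<and> purification n m \<rho> \<Phi> \<longrightarrow>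
            QFI n \<rho> HS \<le> 4 * variance (H_tot n m HS HA) \<Phi>) \<and>
         (\<exists>m HA \<Phi>. hermitian_mat m HA \<and> purification n m \<rho> \<Phi> \<and>
            QFI n \<rho> HS = 4 * variance (H_tot n m HS HA) \<Phi>)"
proof -
  note HSh = assms(1) and d = assms(2)
  have rh: "hermitian_mat n \<rho>" using d unfolding density_mat_def by auto
  obtain p \<psi> where sd: "spectral_decomp n \<rho> p \<psi>" and q: "QFI n \<rho> HS = qf n p \<psi> HS"
    using QFI_some[OF rh] by blast
  have pnn: "\<And>l. l < n \<Longrightarrow> p l \<ge> 0" and psum: "(\<Sum>j<n. p j) = 1" using density_p[OF d sd] by auto
  have A: "QFI n \<rho> HS \<le> 4 * variance (H_tot n m HS HA) \<Phi>"
    if "hermitian_mat m HA" "purification n m \<rho> \<Phi>" for m HA \<Phi>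
    unfolding q by (rule main_ineq[OF HSh that(1) sd pnn that(2)])
  obtain G \<Phi> where G: "hermitian_mat n G" and pur: "purification n n \<rho> \<Phi>"
    and le: "4 * variance (H_tot n n HS G) \<Phi> \<le> qf n p \<psi> HS"
    using exist_part[OF HSh sd pnn psum] by blast
  have eq: "QFI n \<rho> HS = 4 * variance (H_tot n n HS G) \<Phi>" using A[OF G pur] le q by simp
  show ?thesis
  proof (intro conjI allI impI)
    fix m HA \<Phi> assume h: "hermitian_mat m HA \<and> purification n m \<rho> \<Phi>"
    show "QFI n \<rho> HS \<le> QFI (n*m) (ketbra \<Phi> \<Phi>) (H_tot n m HS HA)"
      unfolding pure_QFI[OF HSh conjunct1[OF h] conjunct2[OF h]] using A h by blast
  next
    show "\<exists>m HA \<Phi>. hermitian_mat m HA \<and> purification n m \<rho> \<Phi> \<and>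
            QFI n \<rho> HS = QFI (n*m) (ketbra \<Phi> \<Phi>) (H_tot n m HS HA)"
      using G pur eq pure_QFI[OF HSh G pur] by metis
  next
    fix m HA \<Phi> assume h: "hermitian_mat m HA \<and> purification n m \<rho> \<Phi>"
    show "QFI n \<rho> HS \<le> 4 * variance (H_tot n m HS HA) \<Phi>" using A h by blast
  next
    show "\<exists>m HA \<Phi>. hermitian_mat m HA \<and> purification n m \<rho> \<Phi> \<and>
            QFI n \<rho> HS = 4 * variance (H_tot n m HS HA) \<Phi>"
      using G pur eq by blast
  qed
qed


end
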